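(* Let $m\ge 2$ and let $\mathcal{R}_m^4$ be the rose graph with $N_m=3m+1$ nodes. The global mean hitting times of the TURW, NBCRW and MERW on $\mathcal{R}_m^4$ are $$\langle T\rangle^{\mathrm T}=\frac{20m(3m-1)}{3(3m+1)}=\frac{20(N_m-1)(N_m-2)}{9N_m},$$ $$\langle T\rangle^{\mathrm B}=\frac{2m^3+12m^2-14m+4}{(3m+1)\sqrt{2m-1}}+\frac{36m^2-8m}{3(3m+1)}=\frac{2N_m^2+30N_m-192}{9\sqrt{6N_m-15}}+\frac{268+20\sqrt{6N_m-15}}{9N_m\sqrt{6N_m-15}}+\frac{12N_m-32}{9},$$ $$\langle T\rangle^{\mathrm M}=\frac{6m^3+36m^2+10m-12}{9m+3}=\frac{2N_m^3+30N_m^2-36N_m-104}{27N_m}.$$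
   Context: The rose graph $\mathcal{R}_m^4$ ($m\ge2$) is obtained by gluing $m$ cycles of length 4 at a single common node, the hub; it has $3m+1$ nodes. Let $\mathbf{A}=(a_{ij})$ be the adjacency matrix and $d_i$ the degrees. TURW: $p_{ij}=a_{ij}/d_i$. MERW: with $\lambda_1$ the largest eigenvalue of $\mathbf{A}$ and $\psi_1$ the positive unit eigenvector, $p_{ij}=\frac{a_{ij}}{\lambda_1}\frac{\psi_{1j}}{\psi_{1i}}$. NBCRW: the non-backtracking matrix $\mathbf{B}$ is indexed by directed edges $i\to j$ (two per undirected edge) with $B_{i\to j,k\to l}=1$ if $j=k$ and $i\ne l$, else $0$; $v$ is a non-negative eigenvector for its leading (Perron–Frobenius) eigenvalue; $x_i=\sum_{j\in\mathcal{N}_i}v_{i\to j}$; and $p_{ij}=a_{ij}x_j/\sum_k a_{ik}x_k$. For a random walk on $N$ nodes, the hitting time $T_{ij}$ is the expected number of steps to first reach $j$ starting from $i$, and the global mean hitting time is $\langle T\rangle=\frac{1}{N(N-1)}\sum_{i}\sum_{j\ne i}T_{ij}$. *)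

theory Defs
  imports Complex_Main
begin

text \<open>Nodes 0..3m, hub = 0; the k-th 4-cycle (k < m) is 0 - 3k+1 - 3k+2 - 3k+3 - 0.\<close>

definition rose_nodes :: "nat \<Rightarrow> nat set" where
  "rose_nodes m = {0..<3*m+1}"

definition rose_edges :: "nat \<Rightarrow> (nat \<times> nat) set" where
  "rose_edges m = (\<Union>k<m. {(0, 3*k+1), (3*k+1, 3*k+2), (3*k+2, 3*k+3), (3*k+3, 0)})"

definition rose_adj :: "nat \<Rightarrow> nat \<Rightarrow> nat \<Rightarrow> real" where
  "rose_adj m i j = (if (i, j) \<in> rose_edges m \<or> (j, i) \<in> rose_edges m then 1 else 0)"

definition degree :: "nat set \<Rightarrow> (nat \<Rightarrow> nat \<Rightarrow> real) \<Rightarrow> nat \<Rightarrow> real" where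
  "degree V a i = (\<Sum>j\<in>V. a i j)"

definition turw :: "nat set \<Rightarrow> (nat \<Rightarrow> nat \<Rightarrow> real) \<Rightarrow> nat \<Rightarrow> nat \<Rightarrow> real" where
  "turw V a i j = a i j / degree V a i"

definition adj_eigenvalues :: "nat set \<Rightarrow> (nat \<Rightarrow> nat \<Rightarrow> real) \<Rightarrow> real set" where
  "adj_eigenvalues V a = {lam. \<exists>\<psi>. (\<exists>i\<in>V. \<psi> i \<noteq> 0) \<and> (\<forall>i\<in>V. (\<Sum>j\<in>V. a i j * \<psi> j) = lam * \<psi> i)}"

definition lambda1 :: "nat set \<Rightarrow> (nat \<Rightarrow> nat \<Rightarrow> real) \<Rightarrow> real" where
  "lambda1 V a = Max (adj_eigenvalues V a)"

definition psi1 :: "nat set \<Rightarrow> (nat \<Rightarrow> nat \<Rightarrow> real) \<Rightarrow> nat \<Rightarrow> real" where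
  "psi1 V a = (SOME \<psi>. (\<forall>i\<in>V. \<psi> i > 0) \<and> (\<Sum>i\<in>V. (\<psi> i)\<^sup>2) = 1 \<and>
      (\<forall>i\<in>V. (\<Sum>j\<in>V. a i j * \<psi> j) = lambda1 V a * \<psi> i))"

definition merw :: "nat set \<Rightarrow> (nat \<Rightarrow> nat \<Rightarrow> real) \<Rightarrow> nat \<Rightarrow> nat \<Rightarrow> real" where
  "merw V a i j = a i j / lambda1 V a * (psi1 V a j / psi1 V a i)"

definition dir_edges :: "nat set \<Rightarrow> (nat \<Rightarrow> nat \<Rightarrow> real) \<Rightarrow> (nat \<times> nat) set" where
  "dir_edges V a = {(i, j). i \<in> V \<and> j \<in> V \<and> a i j \<noteq> 0}"

definition nb_matrix :: "nat \<times> nat \<Rightarrow> nat \<times> nat \<Rightarrow> real" where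
  "nb_matrix e f = (if snd e = fst f \<and> fst e \<noteq> snd f then 1 else 0)"

definition nb_eigenvalues :: "nat set \<Rightarrow> (nat \<Rightarrow> nat \<Rightarrow> real) \<Rightarrow> complex set" where
  "nb_eigenvalues V a = {\<mu>. \<exists>v. (\<exists>e\<in>dir_edges V a. v e \<noteq> 0) \<and>
      (\<forall>e\<in>dir_edges V a. (\<Sum>f\<in>dir_edges V a. complex_of_real (nb_matrix e f) * v f) = \<mu> * v e)}"

definition nb_leading :: "nat set \<Rightarrow> (nat \<Rightarrow> nat \<Rightarrow> real) \<Rightarrow> real" where
  "nb_leading V a = Max (cmod ` nb_eigenvalues V a)"

definition nb_vec :: "nat set \<Rightarrow> (nat \<Rightarrow> nat \<Rightarrow> real) \<Rightarrow> nat \<times> nat \<Rightarrow> real" where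
  "nb_vec V a = (SOME v. (\<forall>e\<in>dir_edges V a. v e \<ge> 0) \<and> (\<exists>e\<in>dir_edges V a. v e \<noteq> 0) \<and>
      (\<forall>e\<in>dir_edges V a. (\<Sum>f\<in>dir_edges V a. nb_matrix e f * v f) = nb_leading V a * v e))"

definition nb_centrality :: "nat set \<Rightarrow> (nat \<Rightarrow> nat \<Rightarrow> real) \<Rightarrow> nat \<Rightarrow> real" where
  "nb_centrality V a i = (\<Sum>j\<in>{j\<in>V. a i j \<noteq> 0}. nb_vec V a (i, j))"

definition nbcrw :: "nat set \<Rightarrow> (nat \<Rightarrow> nat \<Rightarrow> real) \<Rightarrow> nat \<Rightarrow> nat \<Rightarrow> real" where
  "nbcrw V a i j = a i j * nb_centrality V a j / (\<Sum>k\<in>V. a i k * nb_centrality V a k)"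

fun first_passage :: "(nat \<Rightarrow> nat \<Rightarrow> real) \<Rightarrow> nat set \<Rightarrow> nat \<Rightarrow> nat \<Rightarrow> nat \<Rightarrow> real" where
  "first_passage P V j 0 i = 0"
| "first_passage P V j (Suc 0) i = P i j"
| "first_passage P V j (Suc (Suc n)) i = (\<Sum>k\<in>V - {j}. P i k * first_passage P V j (Suc n) k)"

definition hitting_time :: "(nat \<Rightarrow> nat \<Rightarrow> real) \<Rightarrow> nat set \<Rightarrow> nat \<Rightarrow> nat \<Rightarrow> real" where
  "hitting_time P V i j = (\<Sum>n. real n * first_passage P V j n i)"

definition mean_hitting_time :: "(nat \<Rightarrow> nat \<Rightarrow> real) \<Rightarrow> nat set \<Rightarrow> real" where
  "mean_hitting_time P V =
     (\<Sum>i\<in>V. \<Sum>j\<in>V - {i}. hitting_time P V i j) / (real (card V) * (real (card V) - 1))"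

end

theory Submission
  imports Defs
begin


lemma decseq_n_times:
  fixes a :: "nat \<Rightarrow> real"
  assumes nonneg: "\<And>n. a n \<ge> 0" and dec: "\<And>n. a (Suc n) \<le> a n" and sm: "summable a"
  shows "(\<lambda>n. real n * a n) \<longlonglongrightarrow> 0"
proof (rule LIMSEQ_I)
  fix e :: real assume e: "e > 0"
  from sm obtain N0 where N0: "\<And>m n. m \<ge> N0 \<Longrightarrow> norm (sum a {m..<n}) < e/2"
    unfolding summable_Cauchy using e by (metis half_gt_zero)
  have anti: "a j \<ge> a n" if "j \<le> n" for j n
    using that by (induction n) (auto simp: le_Suc_eq intro: order_trans[OF dec])
  show "\<exists>no. \<forall>n\<ge>no. norm (real n * a n - 0) < e"
  proof (intro exI allI impI)
    fix n assume n: "n \<ge> 2*N0"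
    define k where "k = n div 2"
    have kN: "k \<ge> N0" using n unfolding k_def by simp
    have "real (n - k) * a n = (\<Sum>i\<in>{k..<n}. a n)" by simp
    also have "\<dots> \<le> sum a {k..<n}" by (rule sum_mono) (auto intro: anti)
    also have "\<dots> < e/2" using N0[OF kN, of n] by (simp add: sum_nonneg nonneg)
    finally have 1: "real (n - k) * a n < e/2" .
    have "real n \<le> 2 * real (n - k)" unfolding k_def by linarith
    hence "real n * a n \<le> 2 * real (n - k) * a n" using nonneg[of n] by (simp add: mult_right_mono)
    with 1 show "norm (real n * a n - 0) < e" using nonneg[of n] by simp
  qed
qed

primrec Sfun :: "(nat \<Rightarrow> nat \<Rightarrow> real) \<Rightarrow> nat set \<Rightarrow> nat \<Rightarrow> nat \<Rightarrow> real" where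
  "Sfun P W 0 k = 1"
| "Sfun P W (Suc n) k = (\<Sum>l\<in>W. P k l * Sfun P W n l)"

primrec Rfun :: "(nat \<Rightarrow> nat \<Rightarrow> real) \<Rightarrow> nat set \<Rightarrow> (nat \<Rightarrow> real) \<Rightarrow> nat \<Rightarrow> nat \<Rightarrow> real" where
  "Rfun P W h 0 k = h k"
| "Rfun P W h (Suc n) k = (\<Sum>l\<in>W. P k l * Rfun P W h n l)"

lemma hitting_time_eq:
  fixes P :: "nat \<Rightarrow> nat \<Rightarrow> real" and h :: "nat \<Rightarrow> real"
  assumes fin: "finite V" and jV: "j \<in> V" and iW: "i \<in> V - {j}"
    and Pnn: "\<And>k l. k \<in> V \<Longrightarrow> l \<in> V \<Longrightarrow> P k l \<ge> 0"
    and Prow: "\<And>k. k \<in> V - {j} \<Longrightarrow> (\<Sum>l\<in>V. P k l) = 1"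
    and hnn: "\<And>k. k \<in> V - {j} \<Longrightarrow> h k \<ge> 0"
    and heq: "\<And>k. k \<in> V - {j} \<Longrightarrow> h k = 1 + (\<Sum>l\<in>V - {j}. P k l * h l)"
  shows "hitting_time P V i j = h i"
proof -
  define W where "W = V - {j}"
  have finW: "finite W" using fin W_def by simp
  have WV: "W \<subseteq> V" using W_def by auto
  define S where "S = Sfun P W"
  define R where "R = Rfun P W h"
  have PnnW: "P k l \<ge> 0" if "k \<in> W" "l \<in> W" for k l using Pnn that WV by auto
  have F1: "first_passage P V j (Suc n) k = S n k - S (Suc n) k" if "k \<in> W" for n k
    using that
  proof (induction n arbitrary: k)
    case 0
    have "(\<Sum>l\<in>V. P k l) = P k j + (\<Sum>l\<in>W. P k l)"
      unfolding W_def using fin jV by (simp add: sum.remove)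
    then show ?case using Prow[of k] 0 unfolding W_def S_def by simp
  next
    case (Suc n)
    have "first_passage P V j (Suc (Suc n)) k = (\<Sum>l\<in>W. P k l * (S n l - S (Suc n) l))"
      using Suc.IH by (simp add: W_def)
    also have "\<dots> = S (Suc n) k - S (Suc (Suc n)) k"
      unfolding S_def by (simp add: right_diff_distrib sum_subtractf)
    finally show ?case .
  qed
  have F2: "S n k \<ge> 0" if "k \<in> W" for n k using that
    by (induction n arbitrary: k) (auto simp: S_def intro!: sum_nonneg mult_nonneg_nonneg PnnW)
  have F3: "S (Suc n) k \<le> S n k" if "k \<in> W" for n k using that
  proof (induction n arbitrary: k)
    case 0
    have "(\<Sum>l\<in>W. P k l) \<le> (\<Sum>l\<in>V. P k l)"
      by (rule sum_mono2[OF fin WV]) (use Pnn 0 WV in auto)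
    then show ?case using Prow[of k] 0 W_def by (simp add: S_def)
  next
    case (Suc n)
    have "(\<Sum>l\<in>W. P k l * S (Suc n) l) \<le> (\<Sum>l\<in>W. P k l * S n l)"
      by (rule sum_mono) (use Suc PnnW in \<open>auto intro: mult_left_mono\<close>)
    then show ?case by (simp add: S_def)
  qed
  have F4: "h k = (\<Sum>n<N. S n k) + R N k" if "k \<in> W" for N k using that
  proof (induction N arbitrary: k)
    case 0 then show ?case by (simp add: R_def)
  next
    case (Suc N)
    have "h k = 1 + (\<Sum>l\<in>W. P k l * ((\<Sum>n<N. S n l) + R N l))"
      using heq[of k] Suc by (simp add: W_def)
    also have "\<dots> = 1 + (\<Sum>n<N. S (Suc n) k) + R (Suc N) k"
      by (simp add: S_def R_def distrib_left sum.distrib sum_distrib_left sum.swap[of _ W])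
    also have "\<dots> = (\<Sum>n<Suc N. S n k) + R (Suc N) k"
      by (subst sum.lessThan_Suc_shift) (simp add: S_def)
    finally show ?case .
  qed
  have F5: "R N k \<ge> 0" if "k \<in> W" for N k using that
    by (induction N arbitrary: k) (auto simp: R_def hnn W_def intro!: sum_nonneg mult_nonneg_nonneg PnnW)
  define c where "c = Max (h ` W)"
  have hc: "h l \<le> c" if "l \<in> W" for l unfolding c_def using finW that by simp
  have F6: "R N k \<le> c * S N k" if "k \<in> W" for N k using that
  proof (induction N arbitrary: k)
    case 0 then show ?case using hc by (simp add: R_def S_def)
  next
    case (Suc N)
    have "(\<Sum>l\<in>W. P k l * R N l) \<le> (\<Sum>l\<in>W. P k l * (c * S N l))"
      by (rule sum_mono) (use Suc PnnW in \<open>auto intro: mult_left_mono\<close>)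
    then show ?case by (simp add: R_def S_def sum_distrib_left algebra_simps)
  qed
  have iW': "i \<in> W" using iW W_def by simp
  have sm: "summable (\<lambda>n. S n i)"
  proof (rule summableI_nonneg_bounded[where x = "h i"])
    show "0 \<le> S n i" for n using F2 iW' by simp
    show "(\<Sum>k<n. S k i) \<le> h i" for n using F4[OF iW', of n] F5[OF iW', of n] by linarith
  qed
  have S0: "(\<lambda>n. S n i) \<longlonglongrightarrow> 0" using summable_LIMSEQ_zero[OF sm] .
  have R0: "(\<lambda>n. R n i) \<longlonglongrightarrow> 0"
  proof (rule tendsto_sandwich[where f = "\<lambda>_. 0" and h = "\<lambda>n. c * S n i"])
    show "\<forall>\<^sub>F n in sequentially. 0 \<le> R n i" using F5 iW' by simp
    show "\<forall>\<^sub>F n in sequentially. R n i \<le> c * S n i" using F6 iW' by simp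
    show "(\<lambda>n. c * S n i) \<longlonglongrightarrow> 0" using tendsto_mult_right_zero[OF S0] by simp
  qed simp
  have sumS: "(\<lambda>N. \<Sum>n<N. S n i) \<longlonglongrightarrow> h i"
  proof -
    have "(\<lambda>N. h i - R N i) \<longlonglongrightarrow> h i - 0" by (rule tendsto_diff[OF tendsto_const R0])
    moreover have "(\<lambda>N. h i - R N i) = (\<lambda>N. \<Sum>n<N. S n i)" using F4 iW' by (auto simp: algebra_simps)
    ultimately show ?thesis by simp
  qed
  have NS: "(\<lambda>n. real n * S n i) \<longlonglongrightarrow> 0"
    by (rule decseq_n_times) (use F2 F3 iW' sm in auto)
  have F9: "(\<Sum>n<Suc N. real n * first_passage P V j n i) = (\<Sum>n<N. S n i) - real N * S N i" for N
  proof (induction N)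
    case 0 then show ?case by simp
  next
    case (Suc N)
    have e1: "S (Suc N) i + first_passage P V j (Suc N) i = S N i" using F1[OF iW', of N] by simp
    have e2: "real N * S N i = real N * S (Suc N) i + real N * first_passage P V j (Suc N) i"
    proof -
      have "real N * S N i = real N * (S (Suc N) i + first_passage P V j (Suc N) i)" using e1 by simp
      thus ?thesis by (simp only: distrib_left)
    qed
    have e3: "(\<Sum>n<Suc (Suc N). real n * first_passage P V j n i) = (\<Sum>n<Suc N. real n * first_passage P V j n i) + (1 + real N) * first_passage P V j (Suc N) i"
      by (simp only: sum.lessThan_Suc of_nat_Suc)
    show ?case using e1 e2 Suc.IH unfolding e3 sum.lessThan_Suc of_nat_Suc distrib_right mult_1 by linarith
  qed
  have "(\<lambda>N. \<Sum>n<Suc N. real n * first_passage P V j n i) \<longlonglongrightarrow> h i - 0"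
    unfolding F9 by (rule tendsto_diff[OF sumS NS])
  hence "(\<lambda>N. \<Sum>n<Suc N. real n * first_passage P V j n i) \<longlonglongrightarrow> h i" by simp
  hence "(\<lambda>N. \<Sum>n<N. real n * first_passage P V j n i) \<longlonglongrightarrow> h i"
    by (rule LIMSEQ_imp_Suc)
  hence "(\<lambda>n. real n * first_passage P V j n i) sums h i" by (simp add: sums_def)
  thus ?thesis unfolding hitting_time_def by (rule sums_unique[symmetric])
qed


lemma V_sum: "(\<Sum>b\<in>rose_nodes m. G b) = G 0 + (\<Sum>k<m. G (3*k+1) + G (3*k+2) + G (3*k+3))"
proof (induction m)
  case 0 then show ?case by (simp add: rose_nodes_def)
next
  case (Suc m)
  have e: "rose_nodes (Suc m) = insert (3*m+3) (insert (3*m+2) (insert (3*m+1) (rose_nodes m)))"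
    by (auto simp: rose_nodes_def)
  have "(\<Sum>b\<in>rose_nodes (Suc m). G b) = G (3*m+3) + (G (3*m+2) + (G (3*m+1) + (\<Sum>b\<in>rose_nodes m. G b)))"
    unfolding e by (simp add: rose_nodes_def)
  then show ?case using Suc by (simp add: add_ac)
qed

lemma node_cases:
  assumes "n \<in> rose_nodes m"
  obtains "n = 0" | k where "k < m" "n = 3*k+1" | k where "k < m" "n = 3*k+2" | k where "k < m" "n = 3*k+3"
proof -
  have "n = 0 \<or> (\<exists>k<m. n = 3*k+1 \<or> n = 3*k+2 \<or> n = 3*k+3)" using assms unfolding rose_nodes_def
    by simp presburger
  then show ?thesis using that by blast
qed

lemma neq3[simp]: "3*a \<noteq> Suc (3*b)" "3*a \<noteq> Suc (Suc (3*b))" "Suc(3*a) \<noteq> 3*b" "Suc (Suc (3*a)) \<noteq> 3*b"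
  "Suc (3*a) \<noteq> 3*b+3" "Suc (Suc (3*a)) \<noteq> 3*b+3" "3*b+3 \<noteq> Suc (3*a)" "3*b+3 \<noteq> Suc (Suc (3*a))"
  by presburger+

lemma A0: "rose_adj m 0 b = (if \<exists>k<m. b = 3*k+1 \<or> b = 3*k+3 then 1 else 0)"
  unfolding rose_adj_def rose_edges_def by auto

lemma A1: "k < m \<Longrightarrow> rose_adj m (3*k+1) b = (if b = 0 \<or> b = 3*k+2 then 1 else 0)"
  unfolding rose_adj_def rose_edges_def by auto

lemma A2: "k < m \<Longrightarrow> rose_adj m (3*k+2) b = (if b = 3*k+1 \<or> b = 3*k+3 then 1 else 0)"
  unfolding rose_adj_def rose_edges_def by auto

lemma A3: "k < m \<Longrightarrow> rose_adj m (3*k+3) b = (if b = 0 \<or> b = 3*k+2 then 1 else 0)"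
  unfolding rose_adj_def rose_edges_def by auto

lemma Aout: "a \<notin> rose_nodes m \<Longrightarrow> rose_adj m a b = 0"
  unfolding rose_adj_def rose_edges_def rose_nodes_def by auto


definition gwt :: "nat \<Rightarrow> real \<Rightarrow> nat \<Rightarrow> nat \<Rightarrow> real" where
  "gwt m p a b = (if a = 0 then 1 / (2 * real m) else if a mod 3 = 2 then 1/2 else if b = 0 then p else 1 - p)"

definition gw :: "nat \<Rightarrow> real \<Rightarrow> nat \<Rightarrow> nat \<Rightarrow> real" where
  "gw m p a b = rose_adj m a b * gwt m p a b"

lemma in_V: "0 \<in> rose_nodes m" "k < m \<Longrightarrow> 3*k+1 \<in> rose_nodes m" "k < m \<Longrightarrow> 3*k+2 \<in> rose_nodes m"
  "k < m \<Longrightarrow> 3*k+3 \<in> rose_nodes m" "finite (rose_nodes m)"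
  by (auto simp: rose_nodes_def)

lemma inV_iff[simp]: "n \<in> rose_nodes m \<longleftrightarrow> n < 3*m+1" by (simp add: rose_nodes_def)

lemma NS0: "(\<Sum>b\<in>rose_nodes m. rose_adj m 0 b * g b) = (\<Sum>k<m. g (3*k+1) + g (3*k+3))"
proof -
  have a: "rose_adj m 0 0 = 0" by (simp add: A0)
  have b: "k < m \<Longrightarrow> rose_adj m 0 (3*k+1) = 1" "k < m \<Longrightarrow> rose_adj m 0 (3*k+3) = 1"
    "rose_adj m 0 (3*k+2) = 0" for k
    by (auto simp: A0)
  show ?thesis unfolding V_sum a mult_zero_left add_0_left by (intro sum.cong refl) (simp add: b[simplified])
qed

lemma NS_pair:
  assumes "x \<in> rose_nodes m" "y \<in> rose_nodes m" "x \<noteq> y"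
    and A: "\<And>b. rose_adj m a b = (if b = x \<or> b = y then 1 else 0)"
  shows "(\<Sum>b\<in>rose_nodes m. rose_adj m a b * g b) = g x + g y"
proof -
  have "(\<Sum>b\<in>rose_nodes m. rose_adj m a b * g b) =
      (\<Sum>b\<in>rose_nodes m. (if b = x then g b else 0) + (if b = y then g b else 0))"
    using assms(3) by (intro sum.cong) (auto simp: A)
  also have "\<dots> = g x + g y" using assms(1,2) by (simp add: sum.distrib in_V)
  finally show ?thesis .
qed

lemma NS1: "k < m \<Longrightarrow> (\<Sum>b\<in>rose_nodes m. rose_adj m (3*k+1) b * g b) = g 0 + g (3*k+2)"
  by (rule NS_pair[OF _ _ _ A1]) (auto simp: in_V)
lemma NS2: "k < m \<Longrightarrow> (\<Sum>b\<in>rose_nodes m. rose_adj m (3*k+2) b * g b) = g (3*k+1) + g (3*k+3)"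
  by (rule NS_pair[OF _ _ _ A2]) (auto simp: in_V)
lemma NS3: "k < m \<Longrightarrow> (\<Sum>b\<in>rose_nodes m. rose_adj m (3*k+3) b * g b) = g 0 + g (3*k+2)"
  by (rule NS_pair[OF _ _ _ A3]) (auto simp: in_V)

lemma mod3: "(3*k+1) mod 3 = (1::nat)" "(3*k+2) mod 3 = (2::nat)" "(3*k+3) mod 3 = (0::nat)"
  by (simp_all add: mod_Suc)

lemmas mod3s[simp] = mod3 mod3[simplified]

lemma GS0: "(\<Sum>b\<in>rose_nodes m. gw m p 0 b * g b) = (\<Sum>k<m. g (3*k+1) + g (3*k+3)) / (2 * real m)"
proof -
  have "(\<Sum>b\<in>rose_nodes m. gw m p 0 b * g b) = (\<Sum>b\<in>rose_nodes m. rose_adj m 0 b * (g b / (2 * real m)))"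
    by (simp add: gw_def gwt_def)
  also have "\<dots> = (\<Sum>k<m. g (3*k+1) / (2 * real m) + g (3*k+3) / (2 * real m))" by (rule NS0)
  finally show ?thesis by (simp add: sum_divide_distrib add_divide_distrib)
qed

lemma GS1: "k < m \<Longrightarrow> (\<Sum>b\<in>rose_nodes m. gw m p (3*k+1) b * g b) = p * g 0 + (1 - p) * g (3*k+2)"
proof -
  assume k: "k < m"
  have "(\<Sum>b\<in>rose_nodes m. gw m p (3*k+1) b * g b) = (\<Sum>b\<in>rose_nodes m. rose_adj m (3*k+1) b * (gwt m p (3*k+1) b * g b))"
    by (simp add: gw_def mult.assoc)
  also have "\<dots> = gwt m p (3*k+1) 0 * g 0 + gwt m p (3*k+1) (3*k+2) * g (3*k+2)" by (rule NS1[OF k])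
  finally show ?thesis by (simp add: gwt_def mod3)
qed

lemma GS2: "k < m \<Longrightarrow> (\<Sum>b\<in>rose_nodes m. gw m p (3*k+2) b * g b) = (g (3*k+1) + g (3*k+3)) / 2"
proof -
  assume k: "k < m"
  have "(\<Sum>b\<in>rose_nodes m. gw m p (3*k+2) b * g b) = (\<Sum>b\<in>rose_nodes m. rose_adj m (3*k+2) b * (gwt m p (3*k+2) b * g b))"
    by (simp add: gw_def mult.assoc)
  also have "\<dots> = gwt m p (3*k+2) (3*k+1) * g (3*k+1) + gwt m p (3*k+2) (3*k+3) * g (3*k+3)" by (rule NS2[OF k])
  finally show ?thesis by (simp add: gwt_def mod3 add_divide_distrib)
qed

lemma GS3: "k < m \<Longrightarrow> (\<Sum>b\<in>rose_nodes m. gw m p (3*k+3) b * g b) = p * g 0 + (1 - p) * g (3*k+2)"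
proof -
  assume k: "k < m"
  have "(\<Sum>b\<in>rose_nodes m. gw m p (3*k+3) b * g b) = (\<Sum>b\<in>rose_nodes m. rose_adj m (3*k+3) b * (gwt m p (3*k+3) b * g b))"
    by (simp add: gw_def mult.assoc)
  also have "\<dots> = gwt m p (3*k+3) 0 * g 0 + gwt m p (3*k+3) (3*k+2) * g (3*k+2)" by (rule NS3[OF k])
  finally show ?thesis by (simp add: gwt_def mod3)
qed


definition shape :: "nat \<Rightarrow> real \<Rightarrow> real \<Rightarrow> real \<Rightarrow> real \<Rightarrow> real \<Rightarrow> real \<Rightarrow> nat \<Rightarrow> real" where
  "shape k0 x0 a1 a2 a3 b1 b2 n = (if n = 0 then x0 else if (n-1) div 3 = k0 then
      (if (n-1) mod 3 = 0 then a1 else if (n-1) mod 3 = 1 then a2 else a3)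
    else (if (n-1) mod 3 = 1 then b2 else b1))"

lemma shape_vals:
  "shape k0 x0 a1 a2 a3 b1 b2 0 = x0"
  "shape k0 x0 a1 a2 a3 b1 b2 (3*k+1) = (if k = k0 then a1 else b1)"
  "shape k0 x0 a1 a2 a3 b1 b2 (3*k+2) = (if k = k0 then a2 else b2)"
  "shape k0 x0 a1 a2 a3 b1 b2 (3*k+3) = (if k = k0 then a3 else b1)"
proof -
  have d: "(3*k+1-1) div 3 = k" "(3*k+2-1) div 3 = k" "(3*k+3-1) div 3 = k"
    "(3*k+1-1) mod 3 = 0" "(3*k+2-1) mod 3 = 1" "(3*k+3-1) mod 3 = (2::nat)" by (simp_all add: mod_Suc)
  show "shape k0 x0 a1 a2 a3 b1 b2 0 = x0"
    "shape k0 x0 a1 a2 a3 b1 b2 (3*k+1) = (if k = k0 then a1 else b1)"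
    "shape k0 x0 a1 a2 a3 b1 b2 (3*k+2) = (if k = k0 then a2 else b2)"
    "shape k0 x0 a1 a2 a3 b1 b2 (3*k+3) = (if k = k0 then a3 else b1)"
    unfolding shape_def by (simp_all only: d) simp_all
qed

lemmas shape_vals_s[simp] = shape_vals shape_vals[simplified]

lemma sum_if_k: "k0 < m \<Longrightarrow> (\<Sum>k<m. if k = k0 then (X::real) else Y) = X + (real m - 1) * Y"
proof -
  assume k0: "k0 < m"
  have "(\<Sum>k<m. if k = k0 then X else Y) = (\<Sum>k<m. Y + (if k = k0 then X - Y else 0))"
    by (intro sum.cong) auto
  also have "\<dots> = real m * Y + (X - Y)" using k0 by (simp add: sum.distrib)
  finally show ?thesis by (simp add: algebra_simps)
qed

lemma sum_shape:
  assumes "k0 < m"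
  shows "(\<Sum>n\<in>rose_nodes m. shape k0 x0 a1 a2 a3 b1 b2 n) = x0 + a1 + a2 + a3 + (real m - 1) * (2*b1 + b2)"
proof -
  have "(\<Sum>n\<in>rose_nodes m. shape k0 x0 a1 a2 a3 b1 b2 n) =
     x0 + (\<Sum>k<m. if k = k0 then a1 + a2 + a3 else 2*b1 + b2)"
    unfolding V_sum by (simp del: shape_vals_s add: shape_vals) (intro sum.cong, auto)
  also have "\<dots> = x0 + a1 + a2 + a3 + (real m - 1) * (2*b1 + b2)" using sum_if_k[OF assms] by simp
  finally show ?thesis .
qed


lemma gw_nonneg: "0 \<le> p \<Longrightarrow> p \<le> 1 \<Longrightarrow> gw m p a b \<ge> 0"
  unfolding gw_def gwt_def rose_adj_def by auto

lemma gw_row: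
  assumes "m \<ge> 1" "a \<in> rose_nodes m"
  shows "(\<Sum>b\<in>rose_nodes m. gw m p a b) = 1"
  using assms(2)
proof (cases rule: node_cases)
  case 1
  then show ?thesis using GS0[of m p "\<lambda>_. 1"] assms(1) by simp
next
  case (2 k) then show ?thesis using GS1[of k m p "\<lambda>_. 1"] by simp
next
  case (3 k) then show ?thesis using GS2[of k m p "\<lambda>_. 1"] by simp
next
  case (4 k) then show ?thesis using GS3[of k m p "\<lambda>_. 1"] by simp
qed

lemma target:
  assumes m: "m \<ge> 1" and p: "0 < p" "p < 1" and jV: "j \<in> rose_nodes m" and hj: "h j = 0"
    and hnn: "\<And>n. n \<in> rose_nodes m \<Longrightarrow> n \<noteq> j \<Longrightarrow> h n \<ge> 0"
    and heq: "\<And>n. n \<in> rose_nodes m \<Longrightarrow> n \<noteq> j \<Longrightarrow> h n = 1 + (\<Sum>l\<in>rose_nodes m. gw m p n l * h l)"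
  shows "(\<Sum>i\<in>rose_nodes m - {j}. hitting_time (gw m p) (rose_nodes m) i j) = (\<Sum>i\<in>rose_nodes m. h i)"
proof -
  have fin: "finite (rose_nodes m)" by (simp add: rose_nodes_def)
  have rem: "(\<Sum>l\<in>rose_nodes m. gw m p n l * h l) = (\<Sum>l\<in>rose_nodes m - {j}. gw m p n l * h l)" for n
    using sum.remove[OF fin jV, of "\<lambda>l. gw m p n l * h l"] hj by simp
  have "(\<Sum>i\<in>rose_nodes m - {j}. hitting_time (gw m p) (rose_nodes m) i j) = (\<Sum>i\<in>rose_nodes m - {j}. h i)"
  proof (rule sum.cong[OF refl])
    fix i assume i: "i \<in> rose_nodes m - {j}"
    show "hitting_time (gw m p) (rose_nodes m) i j = h i"
    proof (rule hitting_time_eq[OF fin jV i])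
      show "\<And>k l. 0 \<le> gw m p k l" using p by (intro gw_nonneg) auto
      show "\<And>k. k \<in> rose_nodes m - {j} \<Longrightarrow> (\<Sum>l\<in>rose_nodes m. gw m p k l) = 1" using gw_row[OF m] by blast
      show "\<And>k. k \<in> rose_nodes m - {j} \<Longrightarrow> 0 \<le> h k" using hnn by blast
      show "\<And>k. k \<in> rose_nodes m - {j} \<Longrightarrow> h k = 1 + (\<Sum>l\<in>rose_nodes m - {j}. gw m p k l * h l)"
        using heq rem by auto
    qed
  qed
  also have "\<dots> = (\<Sum>i\<in>rose_nodes m. h i)" using sum.remove[OF fin jV, of h] hj by simp
  finally show ?thesis .
qed

lemma shape_hit:
  fixes x0 a1 a2 a3 b1 b2 p :: real
  assumes m: "m \<ge> 1" and p: "0 < p" "p < 1" and k0: "k0 < m"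
    and j: "j = 0 \<or> j = 3*k0+1 \<or> j = 3*k0+2 \<or> j = 3*k0+3"
    and hj: "shape k0 x0 a1 a2 a3 b1 b2 j = 0"
    and nn: "x0 \<ge> 0" "a1 \<ge> 0" "a2 \<ge> 0" "a3 \<ge> 0" "b1 \<ge> 0" "b2 \<ge> 0"
    and e0: "j \<noteq> 0 \<Longrightarrow> x0 = 1 + (a1 + a3 + (real m - 1) * (2*b1)) / (2 * real m)"
    and e1: "j \<noteq> 3*k0+1 \<Longrightarrow> a1 = 1 + p * x0 + (1-p) * a2"
    and e2: "j \<noteq> 3*k0+2 \<Longrightarrow> a2 = 1 + (a1 + a3) / 2"
    and e3: "j \<noteq> 3*k0+3 \<Longrightarrow> a3 = 1 + p * x0 + (1-p) * a2"
    and f1: "b1 = 1 + p * x0 + (1-p) * b2"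
    and f2: "b2 = 1 + (b1 + b1) / 2"
  shows "(\<Sum>i\<in>rose_nodes m - {j}. hitting_time (gw m p) (rose_nodes m) i j)
      = x0 + a1 + a2 + a3 + (real m - 1) * (2*b1 + b2)"
proof -
  define h where "h = shape k0 x0 a1 a2 a3 b1 b2"
  have jV: "j \<in> rose_nodes m" using j k0 by auto
  have "(\<Sum>i\<in>rose_nodes m - {j}. hitting_time (gw m p) (rose_nodes m) i j) = (\<Sum>i\<in>rose_nodes m. h i)"
  proof (rule target[OF m p jV])
    show "h j = 0" using hj h_def by simp
    show "0 \<le> h n" if "n \<in> rose_nodes m" "n \<noteq> j" for n
      using nn unfolding h_def shape_def by auto
    show "h n = 1 + (\<Sum>l\<in>rose_nodes m. gw m p n l * h l)" if n: "n \<in> rose_nodes m" "n \<noteq> j" for n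
      using n(1)
    proof (cases rule: node_cases)
      case 1
      have "(\<Sum>k<m. h (3*k+1) + h (3*k+3)) = (\<Sum>k<m. if k = k0 then a1 + a3 else 2 * b1)"
        unfolding h_def by (intro sum.cong) auto
      also have "\<dots> = a1 + a3 + (real m - 1) * (2*b1)" using sum_if_k[OF k0] by simp
      finally show ?thesis using 1 n(2) e0 GS0[of m p h] by (simp add: h_def)
    next
      case (2 k)
      show ?thesis
      proof (cases "k = k0")
        case True then show ?thesis using 2 n(2) e1 GS1[OF 2(1), of p h] by (simp add: h_def)
      next
        case False then show ?thesis using 2 f1 GS1[OF 2(1), of p h] by (simp add: h_def)
      qed
    next
      case (3 k)
      show ?thesis
      proof (cases "k = k0")
        case True then show ?thesis using 3 n(2) e2 GS2[OF 3(1), of p h] by (simp add: h_def)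
      next
        case False then show ?thesis using 3 f2 GS2[OF 3(1), of p h] by (simp add: h_def)
      qed
    next
      case (4 k)
      show ?thesis
      proof (cases "k = k0")
        case True then show ?thesis using 4 n(2) e3 GS3[OF 4(1), of p h] by (simp add: h_def)
      next
        case False then show ?thesis using 4 f1 GS3[OF 4(1), of p h] by (simp add: h_def)
      qed
    qed
  qed
  also have "\<dots> = x0 + a1 + a2 + a3 + (real m - 1) * (2*b1 + b2)" unfolding h_def by (rule sum_shape[OF k0])
  finally show ?thesis .
qed


definition HB :: "nat \<Rightarrow> real \<Rightarrow> real" where "HB m p = 2 * (real m - 1 + p) / (p * (1 - p))"
definition HA :: "nat \<Rightarrow> real \<Rightarrow> real" where "HA m p = (1 + p) * (real m + (real m - 1) * (2 - p) / p) + 2 - p"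
definition CA :: "nat \<Rightarrow> real \<Rightarrow> real" where "CA m p = 2 * (2 - p + p * HA m p) / (1 + p)"

definition TB :: "nat \<Rightarrow> real \<Rightarrow> real" where
  "TB m p = HB m p + 2 * (1 + p * HB m p) + (real m - 1) * (2 * ((2-p)/p + HB m p) + (2/p + HB m p))"
definition TA :: "nat \<Rightarrow> real \<Rightarrow> real" where
  "TA m p = HA m p + (1 + CA m p / 2) + CA m p + (real m - 1) * (2 * ((2-p)/p + HA m p) + (2/p + HA m p))"

lemma T_hub:
  assumes m: "m \<ge> 1" and p: "0 < p" "p < 1"
  shows "(\<Sum>i\<in>rose_nodes m - {0}. hitting_time (gw m p) (rose_nodes m) i 0) = real m * (6 - 2*p) / p"
proof -
  have "(\<Sum>i\<in>rose_nodes m - {0}. hitting_time (gw m p) (rose_nodes m) i 0) =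
      0 + (2-p)/p + 2/p + (2-p)/p + (real m - 1) * (2 * ((2-p)/p) + 2/p)"
    by (rule shape_hit[OF m p, of 0]) (use m p in \<open>auto simp: field_simps\<close>)
  also have "\<dots> = real m * (6 - 2*p) / p" using p by (simp add: field_simps)
  finally show ?thesis .
qed

lemma T_mid:
  assumes m: "m \<ge> 1" and p: "0 < p" "p < 1" and k0: "k0 < m"
  shows "(\<Sum>i\<in>rose_nodes m - {3*k0+2}. hitting_time (gw m p) (rose_nodes m) i (3*k0+2)) = TB m p"
proof -
  have pz: "p \<noteq> 0" "1 - p \<noteq> 0" "real m \<noteq> 0" using m p by auto
  define H where "H = HB m p"
  have Hd: "H * (p * (1 - p)) = 2 * (real m - 1 + p)" unfolding H_def HB_def using pz by simp
  have H: "H \<ge> 0" unfolding H_def HB_def using m p by (intro divide_nonneg_pos) auto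
  have "(\<Sum>i\<in>rose_nodes m - {3*k0+2}. hitting_time (gw m p) (rose_nodes m) i (3*k0+2)) =
      H + (1 + p * H) + 0 + (1 + p * H) + (real m - 1) * (2 * ((2-p)/p + H) + (2/p + H))"
  proof (rule shape_hit[OF m p k0])
    show "H = 1 + (1 + p * H + (1 + p * H) + (real m - 1) * (2 * ((2-p)/p + H))) / (2 * real m)"
      using pz Hd by (simp add: field_simps; algebra)
    show "(2 - p) / p + H = 1 + p * H + (1 - p) * (2 / p + H)"
      using pz by (simp add: field_simps; algebra)
    show "2 / p + H = 1 + ((2 - p) / p + H + ((2 - p) / p + H)) / 2"
      using pz by (simp add: field_simps; algebra)
    show "0 \<le> (2 - p) / p + H" "0 \<le> 2 / p + H" "0 \<le> 1 + p * H" using p H by auto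
  qed (use H p in auto)
  then show ?thesis unfolding TB_def H_def by simp
qed

lemma HA_nn: "m \<ge> 1 \<Longrightarrow> 0 < p \<Longrightarrow> p < 1 \<Longrightarrow> HA m p \<ge> 0"
proof -
  assume a: "m \<ge> 1" "0 < p" "p < 1"
  have "0 \<le> (real m - 1) * (2 - p) / p" using a by (intro divide_nonneg_pos mult_nonneg_nonneg) auto
  hence "0 \<le> (1 + p) * (real m + (real m - 1) * (2 - p) / p)" using a by (intro mult_nonneg_nonneg) auto
  thus ?thesis unfolding HA_def using a by linarith
qed

lemma CA_nn: "m \<ge> 1 \<Longrightarrow> 0 < p \<Longrightarrow> p < 1 \<Longrightarrow> CA m p \<ge> 0"
  unfolding CA_def using HA_nn[of m p] by (intro divide_nonneg_pos mult_nonneg_nonneg add_nonneg_nonneg) auto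

lemma T_end:
  assumes m: "m \<ge> 1" and p: "0 < p" "p < 1" and k0: "k0 < m"
  shows "(\<Sum>i\<in>rose_nodes m - {3*k0+1}. hitting_time (gw m p) (rose_nodes m) i (3*k0+1)) = TA m p"
    "(\<Sum>i\<in>rose_nodes m - {3*k0+3}. hitting_time (gw m p) (rose_nodes m) i (3*k0+3)) = TA m p"
proof -
  have pz: "p \<noteq> 0" "1 - p \<noteq> 0" "real m \<noteq> 0" "1 + p \<noteq> 0" using m p by auto
  define H where "H = HA m p"
  define C where "C = CA m p"
  have Hd: "H * p = (1 + p) * (real m * p + (real m - 1) * (2 - p)) + (2 - p) * p"
    unfolding H_def HA_def using pz by (simp add: field_simps)
  have Cd: "C * (1 + p) = 2 * (2 - p + p * H)" unfolding C_def CA_def H_def using pz by simp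
  have H: "H \<ge> 0" unfolding H_def using HA_nn m p by simp
  have C: "C \<ge> 0" unfolding C_def using CA_nn m p by simp
  have e0: "H = 1 + (a1 + a3 + (real m - 1) * (2 * ((2-p)/p + H))) / (2 * real m)"
    if "a1 + a3 = C" for a1 a3
    using pz Hd Cd that by (simp add: field_simps; algebra)
  have e3: "C = 1 + p * H + (1 - p) * (1 + C / 2)"
    using pz Cd by (simp add: field_simps; algebra)
  have f1: "(2 - p) / p + H = 1 + p * H + (1 - p) * (2 / p + H)"
    using pz by (simp add: field_simps; algebra)
  have f2: "2 / p + H = 1 + ((2 - p) / p + H + ((2 - p) / p + H)) / 2"
    using pz by (simp add: field_simps; algebra)
  have nn: "0 \<le> (2 - p) / p + H" "0 \<le> 2 / p + H" "0 \<le> 1 + C / 2" using p H C by auto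
  have "(\<Sum>i\<in>rose_nodes m - {3*k0+1}. hitting_time (gw m p) (rose_nodes m) i (3*k0+1)) =
      H + 0 + (1 + C / 2) + C + (real m - 1) * (2 * ((2-p)/p + H) + (2/p + H))"
  proof -
    have E0: "3*k0+1 \<noteq> 0 \<Longrightarrow> H = 1 + (0 + C + (real m - 1) * (2 * ((2-p)/p + H))) / (2 * real m)"
      by (rule e0) simp
    have E1: "3*k0+1 \<noteq> 3*k0+1 \<Longrightarrow> (0::real) = 1 + p * H + (1 - p) * (1 + C / 2)" by simp
    have E2: "3*k0+1 \<noteq> 3*k0+2 \<Longrightarrow> 1 + C / 2 = 1 + (0 + C) / 2" by simp
    have E3: "3*k0+1 \<noteq> 3*k0+3 \<Longrightarrow> C = 1 + p * H + (1 - p) * (1 + C / 2)" using e3 by blast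
    show ?thesis by (rule shape_hit[OF m p k0 _ _ _ _ _ _ _ _ E0 E1 E2 E3 f1 f2]) (use H C nn in simp_all)
  qed
  then show "(\<Sum>i\<in>rose_nodes m - {3*k0+1}. hitting_time (gw m p) (rose_nodes m) i (3*k0+1)) = TA m p"
    unfolding TA_def H_def C_def by simp
  have "(\<Sum>i\<in>rose_nodes m - {3*k0+3}. hitting_time (gw m p) (rose_nodes m) i (3*k0+3)) =
      H + C + (1 + C / 2) + 0 + (real m - 1) * (2 * ((2-p)/p + H) + (2/p + H))"
  proof -
    have E0: "3*k0+3 \<noteq> 0 \<Longrightarrow> H = 1 + (C + 0 + (real m - 1) * (2 * ((2-p)/p + H))) / (2 * real m)"
      by (rule e0) simp
    have E3: "3*k0+3 \<noteq> 3*k0+3 \<Longrightarrow> (0::real) = 1 + p * H + (1 - p) * (1 + C / 2)" by simp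
    have E2: "3*k0+3 \<noteq> 3*k0+2 \<Longrightarrow> 1 + C / 2 = 1 + (C + 0) / 2" by simp
    have E1: "3*k0+3 \<noteq> 3*k0+1 \<Longrightarrow> C = 1 + p * H + (1 - p) * (1 + C / 2)" using e3 by blast
    show ?thesis by (rule shape_hit[OF m p k0 _ _ _ _ _ _ _ _ E0 E1 E2 E3 f1 f2]) (use H C nn in simp_all)
  qed
  then show "(\<Sum>i\<in>rose_nodes m - {3*k0+3}. hitting_time (gw m p) (rose_nodes m) i (3*k0+3)) = TA m p"
    unfolding TA_def H_def C_def by simp
qed

definition Tot :: "nat \<Rightarrow> real \<Rightarrow> real" where
  "Tot m p = real m * (6 - 2*p) / p + real m * (TB m p + 2 * TA m p)"

lemma mean_gw:
  assumes m: "m \<ge> 1" and p: "0 < p" "p < 1"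
  shows "mean_hitting_time (gw m p) (rose_nodes m) = Tot m p / ((3 * real m + 1) * (3 * real m))"
proof -
  have c: "card (rose_nodes m) = 3*m+1" by (simp add: rose_nodes_def)
  have "(\<Sum>j\<in>rose_nodes m. \<Sum>i\<in>rose_nodes m - {j}. hitting_time (gw m p) (rose_nodes m) i j) = Tot m p"
    unfolding V_sum using T_hub[OF m p] T_mid[OF m p] T_end[OF m p]
    by (simp add: Tot_def)
  moreover have "(\<Sum>i\<in>rose_nodes m. \<Sum>j\<in>rose_nodes m - {i}. hitting_time (gw m p) (rose_nodes m) i j)
     = (\<Sum>j\<in>rose_nodes m. \<Sum>i\<in>rose_nodes m - {j}. hitting_time (gw m p) (rose_nodes m) i j)"
  proof -
    have fin: "finite (rose_nodes m)" by (simp add: rose_nodes_def)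
    have A: "\<And>i. {y. y \<in> rose_nodes m \<and> i \<noteq> y} = rose_nodes m - {i}" by auto
    have B: "\<And>j. {x. x \<in> rose_nodes m \<and> x \<noteq> j} = rose_nodes m - {j}" by auto
    show ?thesis
      using sum.swap_restrict[OF fin fin, of "\<lambda>i j. hitting_time (gw m p) (rose_nodes m) i j" "\<lambda>i j. i \<noteq> j"]
      unfolding A B .

  qed
  ultimately show ?thesis unfolding mean_hitting_time_def c by simp
qed


lemma Tot_closed:
  assumes "0 < p" "p < 1"
  shows "Tot m p = real m ^ 2 * ((18 * real m - 12) + 16 * p - (4 + 12 * real m) * p^2) / (p * (1 - p))"
proof -
  have nz: "p \<noteq> 0" "1 - p \<noteq> 0" "1 + p \<noteq> 0" "p * (1 - p) \<noteq> 0" using assms by auto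
  define u where "u = 1 / p"
  define hb where "hb = HB m p"
  define ha where "ha = HA m p"
  define ca where "ca = CA m p"
  have u: "u * p = 1" unfolding u_def using nz by simp
  define w where "w = 1 / (1 + p)"
  have w: "w * (1 + p) = 1" unfolding w_def using nz by simp
  have d1: "(2 - p) / p = (2 - p) * u" "2 / p = 2 * u" "(6 - 2*p) / p = (6 - 2*p) * u" unfolding u_def by simp_all
  have hb: "hb * (p * (1 - p)) = 2 * (real m - 1 + p)" unfolding hb_def HB_def using nz by simp
  have ha: "ha = (1 + p) * (real m + (real m - 1) * (2 - p) * u) + 2 - p" unfolding ha_def HA_def u_def by simp
  have ca: "ca * (1 + p) = 2 * (2 - p + p * ha)" unfolding ca_def CA_def ha_def using nz by simp
  have T: "Tot m p = real m * ((6 - 2*p) * u) + real m * ((hb + 2 * (1 + p * hb) + (real m - 1) * (2 * ((2-p) * u + hb) + (2 * u + hb)))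
      + 2 * (ha + (1 + ca / 2) + ca + (real m - 1) * (2 * ((2-p) * u + ha) + (2 * u + ha))))"
    unfolding Tot_def TB_def TA_def hb_def[symmetric] ha_def[symmetric] ca_def[symmetric] d1 mult.assoc by (simp add: u_def)
  have "Tot m p * (p * (1 - p)) = real m ^ 2 * ((18 * real m - 12) + 16 * p - (4 + 12 * real m) * p^2)"
    unfolding T using u w hb ha ca by algebra
  thus ?thesis using nz by (simp add: field_simps)
qed

lemma fin_B:
  fixes M s :: real assumes "M \<ge> 2" "real m = M" "s > 0" "s^2 = 2*M - 1"
  shows "Tot m (M / (M+s)) / ((3 * M + 1) * (3 * M)) = 
     (2*M^3 + 12*M^2 - 14*M + 4) / ((3*M + 1) * s) + (36*M^2 - 8*M) / (3 * (3*M + 1))"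
proof -
  define p where "p = M / (M + s)"
  have nz: "M + s \<noteq> 0" "s \<noteq> 0" "M \<noteq> 0" "3*M+1 \<noteq> 0" using assms by auto
  have pd: "p * (M + s) = M" unfolding p_def using nz by simp
  have p: "0 < p" "p < 1" unfolding p_def using assms by auto
  have pz: "p \<noteq> 0" "1 - p \<noteq> 0" using p by auto
  define X where "X = 6*M^3 + 36*M^2*s + 18*M*s^2 - 8*M*s - 12*s^2"
  have "Tot m p = M^2 * ((18 * M - 12) + 16 * p - (4 + 12 * M) * p^2) / (p * (1 - p))"
    using Tot_closed[OF p, of m] assms(2) by simp
  also have "\<dots> = M * X / s"
  proof -
    have "M^2 * ((18 * M - 12) + 16 * p - (4 + 12 * M) * p^2) * s * (M + s)^2 = M * X * (p * (1 - p)) * (M + s)^2"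
    proof -
      have e1: "M^2 * ((18 * M - 12) + 16 * p - (4 + 12 * M) * p^2) * s * (M + s)^2 =
          M^2 * s * ((18 * M - 12) * (M + s)^2 + 16 * (p * (M + s)) * (M + s) - (4 + 12 * M) * (p * (M + s))^2)"
        by algebra
      have e2: "M * X * (p * (1 - p)) * (M + s)^2 = M * X * (p * (M + s)) * ((M + s) - p * (M + s))"
        by algebra
      show ?thesis unfolding e1 e2 pd unfolding X_def by algebra
    qed
    hence "M^2 * ((18 * M - 12) + 16 * p - (4 + 12 * M) * p^2) * s = M * X * (p * (1 - p))"
      using nz(1) by simp
    thus ?thesis using pz nz by (simp add: field_simps)
  qed
  finally have T: "Tot m p = M * X / s" .
  have XX: "X = 3 * (2*M^3 + 12*M^2 - 14*M + 4) + (36*M^2 - 8*M) * s"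
    unfolding X_def using assms(4) by algebra
  define D where "D = 3 * (3*M+1) * s"
  have Dz: "D \<noteq> 0" unfolding D_def using nz by simp
  have sD: "s * ((3 * M + 1) * (3 * M)) = M * D" unfolding D_def by (simp add: algebra_simps)
  have "M * X / s / ((3 * M + 1) * (3 * M)) = M * X / (M * D)"
    unfolding divide_divide_eq_left sD ..
  also have "\<dots> = X / D" using nz(3) by simp
  finally have L: "M * X / s / ((3 * M + 1) * (3 * M)) * D = X" using Dz by simp
  have R1: "(2*M^3 + 12*M^2 - 14*M + 4) / ((3*M + 1) * s) * D = 3 * (2*M^3 + 12*M^2 - 14*M + 4)"
  proof -
    have "D = ((3*M + 1) * s) * 3" unfolding D_def by simp
    thus ?thesis using nz by simp
  qed
  have R2: "(36*M^2 - 8*M) / (3 * (3*M + 1)) * D = (36*M^2 - 8*M) * s"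
    unfolding D_def using nz by simp
  have R: "((2*M^3 + 12*M^2 - 14*M + 4) / ((3*M + 1) * s) + (36*M^2 - 8*M) / (3 * (3*M + 1))) * D
      = 3 * (2*M^3 + 12*M^2 - 14*M + 4) + (36*M^2 - 8*M) * s" using R1 R2 by (metis distrib_right)
  have "M * X / s / ((3 * M + 1) * (3 * M)) = (2*M^3 + 12*M^2 - 14*M + 4) / ((3*M + 1) * s) + (36*M^2 - 8*M) / (3 * (3*M + 1))"
    using L R XX Dz by (metis mult_right_cancel)
  then show ?thesis unfolding p_def[symmetric] T .
qed


lemma fin_T:
  fixes M :: real assumes M: "M \<ge> 2" "real m = M"
  shows "Tot m (1/2) / ((3 * M + 1) * (3 * M)) = 20 * M * (3*M - 1) / (3 * (3*M + 1))"
proof -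
  have "Tot m (1/2) = M^2 * ((18 * M - 12) + 16 * (1/2) - (4 + 12 * M) * (1/2)^2) / (1/2 * (1 - 1/2))"
    using Tot_closed[of "1/2" m] M(2) by simp
  also have "\<dots> = 20 * M^2 * (3 * M - 1)" by (simp add: algebra_simps power2_eq_square)
  finally have T: "Tot m (1/2) = 20 * M^2 * (3 * M - 1)" .
  have nz: "(3 * M + 1) * (3 * M) \<noteq> 0" "3 * (3*M + 1) \<noteq> 0" using M by auto
  have "20 * M^2 * (3 * M - 1) * (3 * (3*M + 1)) = 20 * M * (3*M - 1) * ((3 * M + 1) * (3 * M))" by algebra
  hence "20 * M^2 * (3 * M - 1) / ((3 * M + 1) * (3 * M)) = 20 * M * (3*M - 1) / (3 * (3*M + 1))"
    by (rule iffD2[OF frac_eq_eq[OF nz]])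
  thus ?thesis unfolding T .
qed

lemma fin_M:
  fixes M :: real assumes M: "M \<ge> 2" "real m = M"
  shows "Tot m (M / (M+1)) / ((3 * M + 1) * (3 * M)) = (6*M^3 + 36*M^2 + 10*M - 12) / (9*M + 3)"
proof -
  define p where "p = M / (M + 1)"
  have nz: "M + 1 \<noteq> 0" "M \<noteq> 0" "3*M+1 \<noteq> 0" using M by auto
  have pd: "p * (M + 1) = M" unfolding p_def using nz by simp
  have p: "0 < p" "p < 1" unfolding p_def using M by auto
  have pz: "p \<noteq> 0" "1 - p \<noteq> 0" using p by auto
  define Y where "Y = 6*M^3 + 36*M^2 + 10*M - 12"
  have "Tot m p = M^2 * ((18 * M - 12) + 16 * p - (4 + 12 * M) * p^2) / (p * (1 - p))"
    using Tot_closed[OF p, of m] M(2) by simp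
  also have "\<dots> = M * Y"
  proof -
    have "M^2 * ((18 * M - 12) + 16 * p - (4 + 12 * M) * p^2) * (M + 1)^2 = M * Y * (p * (1 - p)) * (M + 1)^2"
    proof -
      have e1: "M^2 * ((18 * M - 12) + 16 * p - (4 + 12 * M) * p^2) * (M + 1)^2 =
          M^2 * ((18 * M - 12) * (M + 1)^2 + 16 * (p * (M + 1)) * (M + 1) - (4 + 12 * M) * (p * (M + 1))^2)"
        by algebra
      have e2: "M * Y * (p * (1 - p)) * (M + 1)^2 = M * Y * (p * (M + 1)) * ((M + 1) - p * (M + 1))"
        by algebra
      show ?thesis unfolding e1 e2 pd unfolding Y_def by algebra
    qed
    hence "M^2 * ((18 * M - 12) + 16 * p - (4 + 12 * M) * p^2) = M * Y * (p * (1 - p))"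
      using nz(1) by simp
    thus ?thesis using pz by (simp add: field_simps)
  qed
  finally have T: "Tot m p = M * Y" .
  have nz2: "(3 * M + 1) * (3 * M) \<noteq> 0" "9*M + 3 \<noteq> 0" using M by auto
  have "M * Y * (9*M + 3) = Y * ((3 * M + 1) * (3 * M))" by algebra
  hence "M * Y / ((3 * M + 1) * (3 * M)) = Y / (9*M + 3)"
    by (rule iffD2[OF frac_eq_eq[OF nz2]])
  thus ?thesis unfolding p_def[symmetric] T Y_def .
qed


lemma adj_nz_cases:
  assumes "rose_adj m a b \<noteq> 0"
  shows "(\<exists>k<m. (a = 0 \<and> b = 3*k+1) \<or> (a = 0 \<and> b = 3*k+3) \<or> (a = 3*k+1 \<and> b = 0) \<or> (a = 3*k+1 \<and> b = 3*k+2)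
     \<or> (a = 3*k+2 \<and> b = 3*k+1) \<or> (a = 3*k+2 \<and> b = 3*k+3) \<or> (a = 3*k+3 \<and> b = 0) \<or> (a = 3*k+3 \<and> b = 3*k+2))"
proof -
  have aV: "a \<in> rose_nodes m" using assms Aout by blast
  from aV show ?thesis
  proof (cases rule: node_cases)
    case 1 then show ?thesis using assms by (auto simp: A0 split: if_splits)
  next
    case (2 k) then show ?thesis using assms A1[OF 2(1), of b] by (auto split: if_splits)
  next
    case (3 k) then show ?thesis using assms A2[OF 3(1), of b] by (auto split: if_splits)
  next
    case (4 k) then show ?thesis using assms A3[OF 4(1), of b] by (auto split: if_splits)
  qed
qed

lemma adj_vals:
  assumes "k < m"
  shows "rose_adj m 0 (3*k+1) = 1" "rose_adj m 0 (3*k+3) = 1" "rose_adj m (3*k+1) 0 = 1" "rose_adj m (3*k+1) (3*k+2) = 1"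
    "rose_adj m (3*k+2) (3*k+1) = 1" "rose_adj m (3*k+2) (3*k+3) = 1" "rose_adj m (3*k+3) 0 = 1" "rose_adj m (3*k+3) (3*k+2) = 1"
proof -
  have e1: "\<exists>k'<m. 3*k+1 = 3*k'+1 \<or> 3*k+1 = 3*k'+3" using assms by blast
  have e3: "\<exists>k'<m. 3*k+3 = 3*k'+1 \<or> 3*k+3 = 3*k'+3" using assms by blast
  show "rose_adj m 0 (3*k+1) = 1" "rose_adj m 0 (3*k+3) = 1"
    unfolding A0 using e1 e3 by (simp_all only: if_True)
  show "rose_adj m (3*k+1) 0 = 1" "rose_adj m (3*k+1) (3*k+2) = 1"
    "rose_adj m (3*k+2) (3*k+1) = 1" "rose_adj m (3*k+2) (3*k+3) = 1" "rose_adj m (3*k+3) 0 = 1" "rose_adj m (3*k+3) (3*k+2) = 1"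
    unfolding A1[OF assms] A2[OF assms] A3[OF assms] by simp_all
qed

lemma gw_eqI:
  assumes z: "\<And>a b. rose_adj m a b = 0 \<Longrightarrow> P a b = 0"
    and h: "\<And>k. k < m \<Longrightarrow> P 0 (3*k+1) = 1 / (2 * real m) \<and> P 0 (3*k+3) = 1 / (2 * real m)
       \<and> P (3*k+1) 0 = p \<and> P (3*k+1) (3*k+2) = 1 - p \<and> P (3*k+2) (3*k+1) = 1/2 \<and> P (3*k+2) (3*k+3) = 1/2
       \<and> P (3*k+3) 0 = p \<and> P (3*k+3) (3*k+2) = 1 - p"
  shows "P = gw m p"
proof (intro ext)
  fix a b
  show "P a b = gw m p a b"
  proof (cases "rose_adj m a b = 0")
    case True then show ?thesis using z by (simp add: gw_def)
  next
    case False
    then obtain k where k: "k < m" and c: "(a = 0 \<and> b = 3*k+1) \<or> (a = 0 \<and> b = 3*k+3) \<or> (a = 3*k+1 \<and> b = 0) \<or> (a = 3*k+1 \<and> b = 3*k+2)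
     \<or> (a = 3*k+2 \<and> b = 3*k+1) \<or> (a = 3*k+2 \<and> b = 3*k+3) \<or> (a = 3*k+3 \<and> b = 0) \<or> (a = 3*k+3 \<and> b = 3*k+2)"
      using adj_nz_cases[OF False] by blast
    from c show ?thesis using h[OF k] adj_vals[OF k] by (elim disjE) (simp_all add: gw_def gwt_def)
  qed
qed

lemma degree_rose:
  assumes "a \<in> rose_nodes m"
  shows "degree (rose_nodes m) (rose_adj m) a = (if a = 0 then 2 * real m else 2)"
  using assms
proof (cases rule: node_cases)
  case 1 then show ?thesis using NS0[of m "\<lambda>_. 1"] by (simp add: degree_def)
next
  case (2 k) then show ?thesis using NS1[OF 2(1), of "\<lambda>_. 1"] by (simp add: degree_def)
next
  case (3 k) then show ?thesis using NS2[OF 3(1), of "\<lambda>_. 1"] by (simp add: degree_def)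
next
  case (4 k) then show ?thesis using NS3[OF 4(1), of "\<lambda>_. 1"] by (simp add: degree_def)
qed

lemma turw_rose: "m \<ge> 1 \<Longrightarrow> turw (rose_nodes m) (rose_adj m) = gw m (1/2)"
proof (rule gw_eqI)
  assume m: "m \<ge> 1"
  show "turw (rose_nodes m) (rose_adj m) a b = 0" if "rose_adj m a b = 0" for a b
    using that by (simp add: turw_def)
  fix k assume k: "k < m"
  have V: "0 \<in> rose_nodes m" "3*k+1 \<in> rose_nodes m" "3*k+2 \<in> rose_nodes m" "3*k+3 \<in> rose_nodes m" using k by auto
  show "turw (rose_nodes m) (rose_adj m) 0 (3*k+1) = 1 / (2 * real m) \<and> turw (rose_nodes m) (rose_adj m) 0 (3*k+3) = 1 / (2 * real m)
       \<and> turw (rose_nodes m) (rose_adj m) (3*k+1) 0 = 1/2 \<and> turw (rose_nodes m) (rose_adj m) (3*k+1) (3*k+2) = 1 - 1/2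
       \<and> turw (rose_nodes m) (rose_adj m) (3*k+2) (3*k+1) = 1/2 \<and> turw (rose_nodes m) (rose_adj m) (3*k+2) (3*k+3) = 1/2
       \<and> turw (rose_nodes m) (rose_adj m) (3*k+3) 0 = 1/2 \<and> turw (rose_nodes m) (rose_adj m) (3*k+3) (3*k+2) = 1 - 1/2"
    unfolding turw_def using degree_rose[OF V(1)] degree_rose[OF V(2)] degree_rose[OF V(3)] degree_rose[OF V(4)] adj_vals[OF k]
    by simp
qed


lemma eig_iff:
  "(\<forall>i\<in>rose_nodes m. (\<Sum>j\<in>rose_nodes m. rose_adj m i j * \<psi> j) = lam * \<psi> i) \<longleftrightarrow>
   ((\<Sum>k<m. \<psi> (3*k+1) + \<psi> (3*k+3)) = lam * \<psi> 0 \<and>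
    (\<forall>k<m. \<psi> 0 + \<psi> (3*k+2) = lam * \<psi> (3*k+1) \<and> \<psi> (3*k+1) + \<psi> (3*k+3) = lam * \<psi> (3*k+2)
       \<and> \<psi> 0 + \<psi> (3*k+2) = lam * \<psi> (3*k+3)))" (is "?L \<longleftrightarrow> ?R")
proof
  assume L: ?L
  have "0 \<in> rose_nodes m" by simp
  hence h0: "(\<Sum>k<m. \<psi> (3*k+1) + \<psi> (3*k+3)) = lam * \<psi> 0" using L NS0[of m \<psi>] by simp
  have "\<psi> 0 + \<psi> (3*k+2) = lam * \<psi> (3*k+1) \<and> \<psi> (3*k+1) + \<psi> (3*k+3) = lam * \<psi> (3*k+2)
       \<and> \<psi> 0 + \<psi> (3*k+2) = lam * \<psi> (3*k+3)" if k: "k < m" for k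
  proof -
    have V: "3*k+1 \<in> rose_nodes m" "3*k+2 \<in> rose_nodes m" "3*k+3 \<in> rose_nodes m" using k by auto
    have "\<psi> 0 + \<psi> (3*k+2) = lam * \<psi> (3*k+1)" using L[rule_format, OF V(1)] NS1[OF k, of \<psi>] by linarith
    moreover have "\<psi> (3*k+1) + \<psi> (3*k+3) = lam * \<psi> (3*k+2)" using L[rule_format, OF V(2)] NS2[OF k, of \<psi>] by linarith
    moreover have "\<psi> 0 + \<psi> (3*k+2) = lam * \<psi> (3*k+3)" using L[rule_format, OF V(3)] NS3[OF k, of \<psi>] by linarith
    ultimately show ?thesis by blast
  qed
  with h0 show ?R by blast
next
  assume R: ?R
  show ?L
  proof
    fix i assume "i \<in> rose_nodes m"
    then show "(\<Sum>j\<in>rose_nodes m. rose_adj m i j * \<psi> j) = lam * \<psi> i"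
    proof (cases rule: node_cases)
      case 1
      have "(\<Sum>j\<in>rose_nodes m. rose_adj m 0 j * \<psi> j) = lam * \<psi> 0" using conjunct1[OF R] NS0[of m \<psi>] by linarith
      then show ?thesis using 1 by simp
    next
      case (2 k) then show ?thesis using conjunct2[OF R] NS1[OF 2(1), of \<psi>] 2(1) by auto
    next
      case (3 k) then show ?thesis using conjunct2[OF R] NS2[OF 3(1), of \<psi>] 3(1) by auto
    next
      case (4 k) then show ?thesis using conjunct2[OF R] NS3[OF 4(1), of \<psi>] 4(1) by auto
    qed
  qed
qed

lemma sum_const_k: "(\<Sum>k<m. (c::real)) = real m * c" by simp

lemma eig_solve:
  fixes lam :: real
  assumes m: "m \<ge> 1" and R: "(\<Sum>k<m. \<psi> (3*k+1) + \<psi> (3*k+3)) = lam * \<psi> 0"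
    "\<And>k. k < m \<Longrightarrow> \<psi> 0 + \<psi> (3*k+2) = lam * \<psi> (3*k+1) \<and> \<psi> (3*k+1) + \<psi> (3*k+3) = lam * \<psi> (3*k+2)
       \<and> \<psi> 0 + \<psi> (3*k+2) = lam * \<psi> (3*k+3)"
    and lam: "lam \<noteq> 0" "lam^2 \<noteq> 2"
  shows "\<psi> 0 = 0 \<and> (\<forall>k<m. \<psi> (3*k+1) = 0 \<and> \<psi> (3*k+2) = 0 \<and> \<psi> (3*k+3) = 0) \<or>
     (lam^2 = 2 * real m + 2 \<and> (\<forall>k<m. \<psi> (3*k+1) = lam * \<psi> 0 / (2 * real m) \<and> \<psi> (3*k+3) = lam * \<psi> 0 / (2 * real m)
        \<and> \<psi> (3*k+2) = \<psi> 0 / real m))"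
proof -
  have ab: "\<psi> (3*k+1) = lam * \<psi> 0 / (lam^2 - 2) \<and> \<psi> (3*k+3) = \<psi> (3*k+1) \<and> \<psi> (3*k+2) = 2 * \<psi> (3*k+1) / lam"
    if k: "k < m" for k
  proof -
    obtain x0 x1 x2 x3 where xs: "x0 = \<psi> 0" "x1 = \<psi> (3*k+1)" "x2 = \<psi> (3*k+2)" "x3 = \<psi> (3*k+3)" by blast
    have e1: "x0 + x2 = lam * x1" and e2: "x1 + x3 = lam * x2" and e3: "x0 + x2 = lam * x3"
      using R(2)[OF k] unfolding xs by blast+
    have 13: "x3 = x1" using e1 e3 lam(1) by (metis mult_left_cancel)
    have 2: "x2 = 2 * x1 / lam" using e2 13 lam(1) by (simp add: field_simps)
    have "lam^2 * x1 = lam * x0 + 2 * x1"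
    proof -
      have "lam^2 * x1 = lam * (lam * x1)" by (simp add: power2_eq_square)
      also have "\<dots> = lam * x0 + lam * x2" by (subst e1[symmetric]) (simp add: distrib_left)
      also have "lam * x2 = 2 * x1" using 2 lam(1) by simp
      finally show ?thesis .
    qed
    hence "x1 * (lam^2 - 2) = lam * x0" by (simp add: algebra_simps)
    hence 1: "x1 = lam * x0 / (lam^2 - 2)" using lam(2) by (simp add: field_simps)
    show ?thesis using 1 2 13 unfolding xs by simp
  qed
  define a where "a = lam * \<psi> 0 / (lam^2 - 2)"
  have "(\<Sum>k<m. \<psi> (3*k+1) + \<psi> (3*k+3)) = (\<Sum>k<m. 2 * a)"
    by (intro sum.cong) (use ab a_def in auto)
  hence hub: "real m * (2 * a) = lam * \<psi> 0" using R(1) by simp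
  show ?thesis
  proof (cases "\<psi> 0 = 0")
    case True
    then show ?thesis using ab a_def by auto
  next
    case False
    have l2': "lam^2 - 2 \<noteq> 0" using lam(2) by simp
    have "(lam * \<psi> 0) * (real m * 2) = (lam * \<psi> 0) * (lam^2 - 2)"
      using hub l2' unfolding a_def by (simp add: field_simps)
    hence "real m * 2 = lam^2 - 2" using False lam(1) by (metis mult_left_cancel mult_eq_0_iff)
    hence l2: "lam^2 = 2 * real m + 2" "lam^2 - 2 = 2 * real m" by simp_all
    show ?thesis using ab l2 by auto
  qed
qed

definition LL :: "nat \<Rightarrow> real" where "LL m = sqrt (2 * real m + 2)"

lemma LL_sq: "(LL m)^2 = 2 * real m + 2" unfolding LL_def by simp
lemma LL_pos: "LL m > 0" unfolding LL_def by simp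

definition phiM :: "nat \<Rightarrow> nat \<Rightarrow> real" where
  "phiM m n = (if n = 0 then 2 * real m else if n mod 3 = 2 then 2 else LL m)"

lemma phiM_eig:
  "\<forall>i\<in>rose_nodes m. (\<Sum>j\<in>rose_nodes m. rose_adj m i j * phiM m j) = LL m * phiM m i"
  unfolding eig_iff
proof (intro conjI allI impI)
  show "(\<Sum>k<m. phiM m (3 * k + 1) + phiM m (3 * k + 3)) = LL m * phiM m 0"
    by (simp add: phiM_def)
  fix k assume "k < m"
  have sq: "LL m * LL m = 2 * real m + 2" using LL_sq[of m] by (simp add: power2_eq_square)
  show "phiM m 0 + phiM m (3 * k + 2) = LL m * phiM m (3 * k + 1)"
    "phiM m (3 * k + 1) + phiM m (3 * k + 3) = LL m * phiM m (3 * k + 2)"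
    "phiM m 0 + phiM m (3 * k + 2) = LL m * phiM m (3 * k + 3)"
    by (simp_all add: phiM_def sq)
qed

lemma adj_eig_sub:
  assumes m: "m \<ge> 1" and lam: "lam \<in> adj_eigenvalues (rose_nodes m) (rose_adj m)"
  shows "lam \<in> {0, sqrt 2, - sqrt 2, LL m, - LL m}"
proof (rule ccontr)
  assume nin: "lam \<notin> {0, sqrt 2, - sqrt 2, LL m, - LL m}"
  from lam obtain \<psi> where nz: "\<exists>i\<in>rose_nodes m. \<psi> i \<noteq> 0"
    and eq: "\<forall>i\<in>rose_nodes m. (\<Sum>j\<in>rose_nodes m. rose_adj m i j * \<psi> j) = lam * \<psi> i"
    unfolding adj_eigenvalues_def by blast
  have l0: "lam \<noteq> 0" using nin by auto
  have l2: "lam^2 \<noteq> 2"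
  proof
    assume "lam^2 = 2"
    hence "lam = sqrt 2 \<or> lam = - sqrt 2" using real_sqrt_unique[of lam 2] real_sqrt_unique[of "-lam" 2]
      by (cases "lam \<ge> 0") auto
    thus False using nin by auto
  qed
  from eq[unfolded eig_iff] have R: "(\<Sum>k<m. \<psi> (3*k+1) + \<psi> (3*k+3)) = lam * \<psi> 0"
    "\<And>k. k < m \<Longrightarrow> \<psi> 0 + \<psi> (3*k+2) = lam * \<psi> (3*k+1) \<and> \<psi> (3*k+1) + \<psi> (3*k+3) = lam * \<psi> (3*k+2)
       \<and> \<psi> 0 + \<psi> (3*k+2) = lam * \<psi> (3*k+3)" by blast+
  from eig_solve[OF m R l0 l2] have "(\<psi> 0 = 0 \<and> (\<forall>k<m. \<psi> (3*k+1) = 0 \<and> \<psi> (3*k+2) = 0 \<and> \<psi> (3*k+3) = 0)) \<or> lam^2 = 2 * real m + 2"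
    by blast
  then show False
  proof
    assume z: "\<psi> 0 = 0 \<and> (\<forall>k<m. \<psi> (3*k+1) = 0 \<and> \<psi> (3*k+2) = 0 \<and> \<psi> (3*k+3) = 0)"
    from nz obtain i where i: "i \<in> rose_nodes m" "\<psi> i \<noteq> 0" by blast
    from i(1) show False
      by (cases rule: node_cases) (use z i(2) in auto)
  next
    assume "lam^2 = 2 * real m + 2"
    hence "lam^2 = (LL m)^2" using LL_sq by simp
    hence "lam = LL m \<or> lam = - LL m" using LL_pos[of m]
      by (metis power2_eq_iff)
    thus False using nin by auto
  qed
qed

lemma lambda1_rose:
  assumes m: "m \<ge> 1"
  shows "lambda1 (rose_nodes m) (rose_adj m) = LL m"
  unfolding lambda1_def
proof (rule Max_eqI)
  show "finite (adj_eigenvalues (rose_nodes m) (rose_adj m))"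
    using adj_eig_sub[OF m] by (meson finite.emptyI finite.insertI finite_subset subsetI)
  show "LL m \<in> adj_eigenvalues (rose_nodes m) (rose_adj m)"
    unfolding adj_eigenvalues_def using phiM_eig[of m] m
    by (intro CollectI exI[of _ "phiM m"] conjI bexI[of _ 0]) (auto simp: phiM_def)
  fix y assume "y \<in> adj_eigenvalues (rose_nodes m) (rose_adj m)"
  hence "y \<in> {0, sqrt 2, - sqrt 2, LL m, - LL m}" using adj_eig_sub[OF m] by blast
  moreover have "sqrt 2 \<le> LL m" unfolding LL_def by simp
  moreover have "0 \<le> LL m" using LL_pos[of m] by simp
  moreover have "- sqrt 2 \<le> LL m" using LL_pos[of m] by (smt (verit) real_sqrt_ge_zero)
  ultimately show "y \<le> LL m" by auto
qed


lemma psi1_props: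
  assumes m: "m \<ge> 1"
  shows "(\<forall>i\<in>rose_nodes m. psi1 (rose_nodes m) (rose_adj m) i > 0) \<and>
    (\<forall>i\<in>rose_nodes m. (\<Sum>j\<in>rose_nodes m. rose_adj m i j * psi1 (rose_nodes m) (rose_adj m) j) = LL m * psi1 (rose_nodes m) (rose_adj m) i)"
proof -
  define c where "c = sqrt (\<Sum>i\<in>rose_nodes m. (phiM m i)^2)"
  have phipos: "phiM m i > 0" for i using m LL_pos[of m] by (simp add: phiM_def)
  have S: "(\<Sum>i\<in>rose_nodes m. (phiM m i)^2) > 0"
  proof (rule sum_pos)
    show "finite (rose_nodes m)" "rose_nodes m \<noteq> {}" by (auto simp: rose_nodes_def)
    show "0 < (phiM m i)^2" for i using phipos[of i] by simp
  qed
  have c: "c > 0" "c^2 = (\<Sum>i\<in>rose_nodes m. (phiM m i)^2)" unfolding c_def using S by auto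
  define \<phi> where "\<phi> = (\<lambda>i. phiM m i / c)"
  have ex: "(\<forall>i\<in>rose_nodes m. \<phi> i > 0) \<and> (\<Sum>i\<in>rose_nodes m. (\<phi> i)\<^sup>2) = 1 \<and>
      (\<forall>i\<in>rose_nodes m. (\<Sum>j\<in>rose_nodes m. rose_adj m i j * \<phi> j) = lambda1 (rose_nodes m) (rose_adj m) * \<phi> i)"
  proof (intro conjI ballI)
    show "\<phi> i > 0" for i unfolding \<phi>_def using phipos c by simp
    have "(\<Sum>i\<in>rose_nodes m. (\<phi> i)\<^sup>2) = (\<Sum>i\<in>rose_nodes m. (phiM m i)^2) / c^2"
      unfolding \<phi>_def by (simp add: power_divide sum_divide_distrib)
    thus "(\<Sum>i\<in>rose_nodes m. (\<phi> i)\<^sup>2) = 1" using c S by simp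
    fix i assume i: "i \<in> rose_nodes m"
    have "(\<Sum>j\<in>rose_nodes m. rose_adj m i j * \<phi> j) = (\<Sum>j\<in>rose_nodes m. rose_adj m i j * phiM m j) / c"
      unfolding \<phi>_def by (simp add: sum_divide_distrib)
    also have "\<dots> = LL m * phiM m i / c" using phiM_eig[of m] i by simp
    finally show "(\<Sum>j\<in>rose_nodes m. rose_adj m i j * \<phi> j) = lambda1 (rose_nodes m) (rose_adj m) * \<phi> i"
      unfolding lambda1_rose[OF m] \<phi>_def by simp
  qed
  have "(\<forall>i\<in>rose_nodes m. psi1 (rose_nodes m) (rose_adj m) i > 0) \<and> (\<Sum>i\<in>rose_nodes m. (psi1 (rose_nodes m) (rose_adj m) i)\<^sup>2) = 1 \<and>
      (\<forall>i\<in>rose_nodes m. (\<Sum>j\<in>rose_nodes m. rose_adj m i j * psi1 (rose_nodes m) (rose_adj m) j) = lambda1 (rose_nodes m) (rose_adj m) * psi1 (rose_nodes m) (rose_adj m) i)"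
    unfolding psi1_def by (rule someI[of _ \<phi>]) (rule ex)
  thus ?thesis unfolding lambda1_rose[OF m] by blast
qed

lemma psi1_vals:
  assumes m: "m \<ge> 1" and k: "k < m"
  defines "\<psi> \<equiv> psi1 (rose_nodes m) (rose_adj m)"
  shows "\<psi> 0 > 0" "\<psi> (3*k+1) = LL m * \<psi> 0 / (2 * real m)" "\<psi> (3*k+3) = LL m * \<psi> 0 / (2 * real m)"
    "\<psi> (3*k+2) = \<psi> 0 / real m"
proof -
  note P = psi1_props[OF m, folded \<psi>_def]
  show p0: "\<psi> 0 > 0" using P by simp
  from conjunct2[OF P, unfolded eig_iff] have R: "(\<Sum>k<m. \<psi> (3*k+1) + \<psi> (3*k+3)) = LL m * \<psi> 0"
    "\<And>k. k < m \<Longrightarrow> \<psi> 0 + \<psi> (3*k+2) = LL m * \<psi> (3*k+1) \<and> \<psi> (3*k+1) + \<psi> (3*k+3) = LL m * \<psi> (3*k+2)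
       \<and> \<psi> 0 + \<psi> (3*k+2) = LL m * \<psi> (3*k+3)" by blast+
  have l0: "LL m \<noteq> 0" using LL_pos[of m] by simp
  have l2: "(LL m)^2 \<noteq> 2" using LL_sq[of m] m by simp
  from eig_solve[OF m R l0 l2] p0 k
  show "\<psi> (3*k+1) = LL m * \<psi> 0 / (2 * real m)" "\<psi> (3*k+3) = LL m * \<psi> 0 / (2 * real m)"
    "\<psi> (3*k+2) = \<psi> 0 / real m" by auto
qed

lemma merw_rose:
  assumes m: "m \<ge> 1"
  shows "merw (rose_nodes m) (rose_adj m) = gw m (real m / (real m + 1))"
proof (rule gw_eqI)
  show "merw (rose_nodes m) (rose_adj m) a b = 0" if "rose_adj m a b = 0" for a b
    using that by (simp add: merw_def)
  fix k assume k: "k < m"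
  define \<psi> where "\<psi> = psi1 (rose_nodes m) (rose_adj m)"
  define L where "L = LL m"
  note v = psi1_vals[OF m k, folded \<psi>_def L_def]
  have Lp: "L > 0" using LL_pos L_def by simp
  have sq: "L * L = 2 * real m + 2" using LL_sq[of m] unfolding L_def by (simp add: power2_eq_square)
  have mp: "real m > 0" using m by simp
  have mer: "merw (rose_nodes m) (rose_adj m) a b = rose_adj m a b / L * (\<psi> b / \<psi> a)" for a b
    unfolding merw_def lambda1_rose[OF m] \<psi>_def L_def ..
  note av = adj_vals[OF k]
  have "merw (rose_nodes m) (rose_adj m) 0 (3*k+1) = 1 / (2 * real m)" unfolding mer av v using Lp v(1) mp by (simp add: field_simps)
  moreover have "merw (rose_nodes m) (rose_adj m) 0 (3*k+3) = 1 / (2 * real m)" unfolding mer av v using Lp v(1) mp by (simp add: field_simps)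
  moreover have "merw (rose_nodes m) (rose_adj m) (3*k+1) 0 = real m / (real m + 1)" unfolding mer av v using Lp v(1) mp sq by (simp add: field_simps)
  moreover have "merw (rose_nodes m) (rose_adj m) (3*k+3) 0 = real m / (real m + 1)" unfolding mer av v using Lp v(1) mp sq by (simp add: field_simps)
  moreover have "merw (rose_nodes m) (rose_adj m) (3*k+1) (3*k+2) = 1 - real m / (real m + 1)" unfolding mer av v using Lp v(1) mp sq by (simp add: field_simps)
  moreover have "merw (rose_nodes m) (rose_adj m) (3*k+3) (3*k+2) = 1 - real m / (real m + 1)" unfolding mer av v using Lp v(1) mp sq by (simp add: field_simps)
  moreover have "merw (rose_nodes m) (rose_adj m) (3*k+2) (3*k+1) = 1/2" unfolding mer av v using Lp v(1) mp by (simp add: field_simps)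
  moreover have "merw (rose_nodes m) (rose_adj m) (3*k+2) (3*k+3) = 1/2" unfolding mer av v using Lp v(1) mp by (simp add: field_simps)
  ultimately show "merw (rose_nodes m) (rose_adj m) 0 (3*k+1) = 1 / (2 * real m) \<and> merw (rose_nodes m) (rose_adj m) 0 (3*k+3) = 1 / (2 * real m)
       \<and> merw (rose_nodes m) (rose_adj m) (3*k+1) 0 = real m / (real m + 1) \<and> merw (rose_nodes m) (rose_adj m) (3*k+1) (3*k+2) = 1 - real m / (real m + 1)
       \<and> merw (rose_nodes m) (rose_adj m) (3*k+2) (3*k+1) = 1/2 \<and> merw (rose_nodes m) (rose_adj m) (3*k+2) (3*k+3) = 1/2
       \<and> merw (rose_nodes m) (rose_adj m) (3*k+3) 0 = real m / (real m + 1) \<and> merw (rose_nodes m) (rose_adj m) (3*k+3) (3*k+2) = 1 - real m / (real m + 1)"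
    by blast
qed


abbreviation "EE m \<equiv> dir_edges (rose_nodes m) (rose_adj m)"
abbreviation "NN m j \<equiv> {l \<in> rose_nodes m. rose_adj m j l \<noteq> 0}"

lemma EE_Sigma: "EE m = Sigma (rose_nodes m) (NN m)"
  unfolding dir_edges_def by auto

lemma Bsum_edge:
  fixes v :: "nat \<times> nat \<Rightarrow> 'a::real_field"
  assumes jV: "j \<in> rose_nodes m"
  shows "(\<Sum>f\<in>EE m. of_real (nb_matrix (i, j) f) * v f) = (\<Sum>l\<in>NN m j - {i}. v (j, l))"
proof -
  have fin: "finite (rose_nodes m)" by (simp add: rose_nodes_def)
  have "(\<Sum>f\<in>EE m. of_real (nb_matrix (i, j) f) * v f) =
      (\<Sum>i'\<in>rose_nodes m. \<Sum>j'\<in>NN m i'. of_real (nb_matrix (i, j) (i', j')) * v (i', j'))"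
  proof -
    have "(\<Sum>i'\<in>rose_nodes m. \<Sum>j'\<in>NN m i'. of_real (nb_matrix (i, j) (i', j')) * v (i', j')) =
      (\<Sum>(i',j')\<in>Sigma (rose_nodes m) (NN m). of_real (nb_matrix (i, j) (i', j')) * v (i', j'))"
      by (rule sum.Sigma) (use fin in auto)
    then show ?thesis unfolding EE_Sigma case_prod_eta by simp
  qed
  also have "\<dots> = (\<Sum>i'\<in>rose_nodes m. if i' = j then (\<Sum>j'\<in>NN m j. if j' \<noteq> i then v (j, j') else 0) else 0)"
    by (intro sum.cong refl) (auto simp: nb_matrix_def intro!: sum.cong)
  also have "\<dots> = (\<Sum>j'\<in>NN m j. if j' \<noteq> i then v (j, j') else 0)"
    using jV fin by (simp add: sum.delta)
  also have "\<dots> = (\<Sum>l\<in>{x \<in> NN m j. x \<noteq> i}. v (j, l))"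
    by (rule sum.inter_filter[symmetric]) (use fin in auto)
  also have "{x \<in> NN m j. x \<noteq> i} = NN m j - {i}" by auto
  finally show ?thesis .
qed

lemma NN_vals:
  assumes k: "k < m"
  shows "NN m (3*k+1) = {0, 3*k+2}" "NN m (3*k+2) = {3*k+1, 3*k+3}" "NN m (3*k+3) = {0, 3*k+2}"
    "NN m 0 = (\<lambda>k. 3*k+1) ` {..<m} \<union> (\<lambda>k. 3*k+3) ` {..<m}"
proof -
  show "NN m (3*k+1) = {0, 3*k+2}" unfolding A1[OF k] using k by auto
  show "NN m (3*k+2) = {3*k+1, 3*k+3}" unfolding A2[OF k] using k by auto
  show "NN m (3*k+3) = {0, 3*k+2}" unfolding A3[OF k] using k by auto
  show "NN m 0 = (\<lambda>k. 3*k+1) ` {..<m} \<union> (\<lambda>k. 3*k+3) ` {..<m}"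
    by (auto simp: A0)
qed

lemma hub_sum:
  fixes w :: "nat \<Rightarrow> 'a::comm_monoid_add"
  shows "(\<Sum>l\<in>(\<lambda>k. 3*k+1) ` {..<m} \<union> (\<lambda>k. 3*k+3) ` {..<m}. w l) = (\<Sum>k<m. w (3*k+1) + w (3*k+3))"
proof -
  have d: "(\<lambda>k. 3*k+1) ` {..<m} \<inter> (\<lambda>k. 3*k+3) ` {..<m} = {}" by auto
  have i1: "inj_on (\<lambda>k. 3*k+1) {..<m}" "inj_on (\<lambda>k::nat. 3*k+3) {..<m}" by (auto simp: inj_on_def)
  have "(\<Sum>l\<in>(\<lambda>k. 3*k+1) ` {..<m} \<union> (\<lambda>k. 3*k+3) ` {..<m}. w l) =
     (\<Sum>l\<in>(\<lambda>k. 3*k+1) ` {..<m}. w l) + (\<Sum>l\<in>(\<lambda>k. 3*k+3) ` {..<m}. w l)"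
    by (rule sum.union_disjoint) (use d in auto)
  also have "(\<Sum>l\<in>(\<lambda>k. 3*k+1) ` {..<m}. w l) = (\<Sum>k<m. w (3*k+1))"
    by (rule sum.reindex_cong[OF i1(1)]) auto
  also have "(\<Sum>l\<in>(\<lambda>k. 3*k+3) ` {..<m}. w l) = (\<Sum>k<m. w (3*k+3))"
    by (rule sum.reindex_cong[OF i1(2)]) auto
  finally show ?thesis by (simp add: sum.distrib)
qed

lemma edge_eqs:
  fixes v :: "nat \<times> nat \<Rightarrow> 'a::real_field"
  assumes k: "k < m"
  shows "(\<Sum>f\<in>EE m. of_real (nb_matrix (0, 3*k+1) f) * v f) = v (3*k+1, 3*k+2)"
    "(\<Sum>f\<in>EE m. of_real (nb_matrix (3*k+1, 3*k+2) f) * v f) = v (3*k+2, 3*k+3)"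
    "(\<Sum>f\<in>EE m. of_real (nb_matrix (3*k+2, 3*k+3) f) * v f) = v (3*k+3, 0)"
    "(\<Sum>f\<in>EE m. of_real (nb_matrix (3*k+3, 0) f) * v f) = (\<Sum>k'<m. v (0, 3*k'+1) + v (0, 3*k'+3)) - v (0, 3*k+3)"
    "(\<Sum>f\<in>EE m. of_real (nb_matrix (0, 3*k+3) f) * v f) = v (3*k+3, 3*k+2)"
    "(\<Sum>f\<in>EE m. of_real (nb_matrix (3*k+3, 3*k+2) f) * v f) = v (3*k+2, 3*k+1)"
    "(\<Sum>f\<in>EE m. of_real (nb_matrix (3*k+2, 3*k+1) f) * v f) = v (3*k+1, 0)"
    "(\<Sum>f\<in>EE m. of_real (nb_matrix (3*k+1, 0) f) * v f) = (\<Sum>k'<m. v (0, 3*k'+1) + v (0, 3*k'+3)) - v (0, 3*k+1)"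
proof -
  have V: "0 \<in> rose_nodes m" "3*k+1 \<in> rose_nodes m" "3*k+2 \<in> rose_nodes m" "3*k+3 \<in> rose_nodes m" using k by auto
  note NV = NN_vals[OF k]
  have fin0: "finite (NN m 0)" by (simp add: rose_nodes_def)
  have in0: "3*k+1 \<in> NN m 0" "3*k+3 \<in> NN m 0" unfolding NV(4) using k by auto
  have S: "{0, 3*k+2} - {0} = {3*k+2}" "{0, 3*k+2} - {3*k+2} = {0}" "{3*k+1, 3*k+3} - {3*k+1} = {3*k+3}"
    "{3*k+1, 3*k+3} - {3*k+3} = {3*k+1}" by auto
  show "(\<Sum>f\<in>EE m. of_real (nb_matrix (0, 3*k+1) f) * v f) = v (3*k+1, 3*k+2)"
    unfolding Bsum_edge[OF V(2)] NV S by simp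
  show "(\<Sum>f\<in>EE m. of_real (nb_matrix (3*k+1, 3*k+2) f) * v f) = v (3*k+2, 3*k+3)"
    unfolding Bsum_edge[OF V(3)] NV S by simp
  show "(\<Sum>f\<in>EE m. of_real (nb_matrix (3*k+2, 3*k+3) f) * v f) = v (3*k+3, 0)"
    unfolding Bsum_edge[OF V(4)] NV S by simp
  show "(\<Sum>f\<in>EE m. of_real (nb_matrix (0, 3*k+3) f) * v f) = v (3*k+3, 3*k+2)"
    unfolding Bsum_edge[OF V(4)] NV S by simp
  show "(\<Sum>f\<in>EE m. of_real (nb_matrix (3*k+3, 3*k+2) f) * v f) = v (3*k+2, 3*k+1)"
    unfolding Bsum_edge[OF V(3)] NV S by simp
  show "(\<Sum>f\<in>EE m. of_real (nb_matrix (3*k+2, 3*k+1) f) * v f) = v (3*k+1, 0)"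
    unfolding Bsum_edge[OF V(2)] NV S by simp
  show "(\<Sum>f\<in>EE m. of_real (nb_matrix (3*k+3, 0) f) * v f) = (\<Sum>k'<m. v (0, 3*k'+1) + v (0, 3*k'+3)) - v (0, 3*k+3)"
    unfolding Bsum_edge[OF V(1)] sum_diff1[OF fin0] using in0 unfolding NV(4) hub_sum by simp
  show "(\<Sum>f\<in>EE m. of_real (nb_matrix (3*k+1, 0) f) * v f) = (\<Sum>k'<m. v (0, 3*k'+1) + v (0, 3*k'+3)) - v (0, 3*k+1)"
    unfolding Bsum_edge[OF V(1)] sum_diff1[OF fin0] using in0 unfolding NV(4) hub_sum by simp
qed

lemma EE_cases:
  assumes "e \<in> EE m"
  shows "\<exists>k<m. e \<in> {(0, 3*k+1), (3*k+1, 3*k+2), (3*k+2, 3*k+3), (3*k+3, 0), (0, 3*k+3), (3*k+3, 3*k+2), (3*k+2, 3*k+1), (3*k+1, 0)}"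
proof -
  obtain a b where e: "e = (a, b)" by (cases e)
  have "rose_adj m a b \<noteq> 0" using assms e by (simp add: dir_edges_def)
  from adj_nz_cases[OF this] obtain k where "k < m" and
    "(a = 0 \<and> b = 3*k+1) \<or> (a = 0 \<and> b = 3*k+3) \<or> (a = 3*k+1 \<and> b = 0) \<or> (a = 3*k+1 \<and> b = 3*k+2)
     \<or> (a = 3*k+2 \<and> b = 3*k+1) \<or> (a = 3*k+2 \<and> b = 3*k+3) \<or> (a = 3*k+3 \<and> b = 0) \<or> (a = 3*k+3 \<and> b = 3*k+2)" by blast
  then show ?thesis using e by blast
qed

lemma EE_mem:
  assumes "k < m"
  shows "(0, 3*k+1) \<in> EE m" "(3*k+1, 3*k+2) \<in> EE m" "(3*k+2, 3*k+3) \<in> EE m" "(3*k+3, 0) \<in> EE m"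
    "(0, 3*k+3) \<in> EE m" "(3*k+3, 3*k+2) \<in> EE m" "(3*k+2, 3*k+1) \<in> EE m" "(3*k+1, 0) \<in> EE m"
  using adj_vals[OF assms] assms unfolding dir_edges_def by auto


definition sM :: "nat \<Rightarrow> real" where "sM m = sqrt (2 * real m - 1)"
definition rr :: "nat \<Rightarrow> real" where "rr m = sqrt (sM m)"

lemma rr_facts:
  assumes "m \<ge> 1"
  shows "rr m > 0" "(rr m)^2 = sM m" "(rr m)^4 = 2 * real m - 1" "sM m > 0" "(sM m)^2 = 2 * real m - 1"
proof -
  have a: "2 * real m - 1 > 0" using assms by simp
  show s: "sM m > 0" unfolding sM_def using a by simp
  show s2: "(sM m)^2 = 2 * real m - 1" unfolding sM_def using a by simp
  show "rr m > 0" unfolding rr_def using s by simp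
  show r2: "(rr m)^2 = sM m" unfolding rr_def using s by simp
  have "(rr m)^4 = ((rr m)^2)^2" by (simp add: power_mult[symmetric])
  thus "(rr m)^4 = 2 * real m - 1" using r2 s2 by simp
qed

lemma chain:
  fixes v :: "nat \<times> nat \<Rightarrow> 'a::real_field"
  assumes k: "k < m" and eq: "\<forall>e\<in>EE m. (\<Sum>f\<in>EE m. of_real (nb_matrix e f) * v f) = \<mu> * v e"
  defines "H \<equiv> (\<Sum>k'<m. v (0, 3*k'+1) + v (0, 3*k'+3))"
  shows "v (3*k+1, 3*k+2) = \<mu> * v (0, 3*k+1)" "v (3*k+2, 3*k+3) = \<mu>^2 * v (0, 3*k+1)"
    "v (3*k+3, 0) = \<mu>^3 * v (0, 3*k+1)" "H - v (0, 3*k+3) = \<mu>^4 * v (0, 3*k+1)"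
    "v (3*k+3, 3*k+2) = \<mu> * v (0, 3*k+3)" "v (3*k+2, 3*k+1) = \<mu>^2 * v (0, 3*k+3)"
    "v (3*k+1, 0) = \<mu>^3 * v (0, 3*k+3)" "H - v (0, 3*k+1) = \<mu>^4 * v (0, 3*k+3)"
proof -
  note E = edge_eqs[OF k, of v, folded H_def]
  note M = EE_mem[OF k]
  have e1: "v (3*k+1, 3*k+2) = \<mu> * v (0, 3*k+1)" using eq M(1) E(1) by auto
  have e2: "v (3*k+2, 3*k+3) = \<mu> * v (3*k+1, 3*k+2)" using eq M(2) E(2) by auto
  have e3: "v (3*k+3, 0) = \<mu> * v (3*k+2, 3*k+3)" using eq M(3) E(3) by auto
  have e4: "H - v (0, 3*k+3) = \<mu> * v (3*k+3, 0)" using eq M(4) E(4) by auto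
  have f1: "v (3*k+3, 3*k+2) = \<mu> * v (0, 3*k+3)" using eq M(5) E(5) by auto
  have f2: "v (3*k+2, 3*k+1) = \<mu> * v (3*k+3, 3*k+2)" using eq M(6) E(6) by auto
  have f3: "v (3*k+1, 0) = \<mu> * v (3*k+2, 3*k+1)" using eq M(7) E(7) by auto
  have f4: "H - v (0, 3*k+1) = \<mu> * v (3*k+1, 0)" using eq M(8) E(8) by auto
  show "v (3*k+1, 3*k+2) = \<mu> * v (0, 3*k+1)" "v (3*k+2, 3*k+3) = \<mu>^2 * v (0, 3*k+1)"
    "v (3*k+3, 0) = \<mu>^3 * v (0, 3*k+1)" "H - v (0, 3*k+3) = \<mu>^4 * v (0, 3*k+1)"
    "v (3*k+3, 3*k+2) = \<mu> * v (0, 3*k+3)" "v (3*k+2, 3*k+1) = \<mu>^2 * v (0, 3*k+3)"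
    "v (3*k+1, 0) = \<mu>^3 * v (0, 3*k+3)" "H - v (0, 3*k+1) = \<mu>^4 * v (0, 3*k+3)"
    using e1 e2 e3 e4 f1 f2 f3 f4 by (simp_all add: power_def mult.assoc)
qed


lemma all_zero:
  fixes v :: "nat \<times> nat \<Rightarrow> 'a::real_field"
  assumes eq: "\<forall>e\<in>EE m. (\<Sum>f\<in>EE m. of_real (nb_matrix e f) * v f) = \<mu> * v e"
    and z: "\<And>k. k < m \<Longrightarrow> v (0, 3*k+1) = 0 \<and> v (0, 3*k+3) = 0"
    and e: "e \<in> EE m"
  shows "v e = 0"
proof -
  from EE_cases[OF e] obtain k where k: "k < m" and
    ek: "e \<in> {(0, 3*k+1), (3*k+1, 3*k+2), (3*k+2, 3*k+3), (3*k+3, 0), (0, 3*k+3), (3*k+3, 3*k+2), (3*k+2, 3*k+1), (3*k+1, 0)}"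
    by blast
  note c = chain[OF k eq]
  from ek show ?thesis using c z[OF k] by auto
qed

lemma pow4_cmod:
  fixes \<mu> :: complex and c :: real
  assumes "\<mu>^4 = of_real c" "c \<ge> 0" "r \<ge> 0" "r^4 = c"
  shows "cmod \<mu> = r"
proof -
  have "(cmod \<mu>)^4 = cmod (\<mu>^4)" by (simp add: norm_power)
  also have "\<dots> = c" using assms(1,2) by simp
  finally have "(cmod \<mu>)^Suc 3 = r^Suc 3" using assms(4) by simp
  thus ?thesis by (rule power_inject_base) (simp_all add: assms(3))
qed

lemma nb_eig_mod:
  assumes m: "m \<ge> 1" and mu: "\<mu> \<in> nb_eigenvalues (rose_nodes m) (rose_adj m)"
  shows "cmod \<mu> = 1 \<or> cmod \<mu> = rr m"
proof -
  from mu obtain v where nz: "\<exists>e\<in>EE m. v e \<noteq> 0"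
    and eq: "\<forall>e\<in>EE m. (\<Sum>f\<in>EE m. complex_of_real (nb_matrix e f) * v f) = \<mu> * v e"
    unfolding nb_eigenvalues_def by blast
  define H where "H = (\<Sum>k'<m. v (0, 3*k'+1) + v (0, 3*k'+3))"
  note c = chain[OF _ eq, folded H_def]
  show ?thesis
  proof (cases "\<mu>^4 = 1 \<or> \<mu>^4 = -1")
    case True
    have "(cmod \<mu>)^4 = cmod (\<mu>^4)" by (simp add: norm_power)
    also have "\<dots> = 1" using True by auto
    finally have "(cmod \<mu>)^Suc 3 = 1^Suc 3" by simp
    hence "cmod \<mu> = 1" by (rule power_inject_base) simp_all
    thus ?thesis by simp
  next
    case False
    have n1: "\<mu>^4 - 1 \<noteq> 0" "\<mu>^4 + 1 \<noteq> 0" using False by (auto simp: add_eq_0_iff2)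
    have aa: "v (0, 3*k+1) = v (0, 3*k+3)" if k: "k < m" for k
    proof -
      have "(\<mu>^4 - 1) * (v (0, 3*k+1) - v (0, 3*k+3)) = 0"
        using c(4)[OF k] c(8)[OF k] by (simp add: algebra_simps)
      thus ?thesis using n1 by simp
    qed
    have aH: "(\<mu>^4 + 1) * v (0, 3*k+1) = H" if k: "k < m" for k
      using c(4)[OF k] aa[OF k] by (simp add: algebra_simps)
    have H2: "H = (\<Sum>k<m. 2 * v (0, 3*k+1))" unfolding H_def by (intro sum.cong) (use aa in auto)
    have "(\<mu>^4 + 1) * H = (\<Sum>k<m. 2 * ((\<mu>^4 + 1) * v (0, 3*k+1)))"
      unfolding H2 sum_distrib_left by (simp add: algebra_simps)
    also have "\<dots> = (\<Sum>k<m. 2 * H)" using aH by simp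
    also have "\<dots> = 2 * of_nat m * H" by simp
    finally have HH: "(\<mu>^4 + 1 - 2 * of_nat m) * H = 0" by (simp add: algebra_simps)
    show ?thesis
    proof (cases "H = 0")
      case True
      have z: "v (0, 3*k+1) = 0 \<and> v (0, 3*k+3) = 0" if "k < m" for k
        using aH[OF that] aa[OF that] True n1 by simp
      from nz obtain e where e: "e \<in> EE m" "v e \<noteq> 0" by blast
      with all_zero[OF eq z e(1)] show ?thesis by simp
    next
      case False
      have "\<mu>^4 + 1 - 2 * of_nat m = 0" using HH False by simp
      hence "\<mu>^4 = of_real (2 * real m - 1)" by (simp add: algebra_simps)
      hence "cmod \<mu> = rr m" by (rule pow4_cmod) (use m rr_facts[OF m] in auto)
      thus ?thesis by simp
    qed
  qed
qed


definition vst :: "real \<Rightarrow> nat \<times> nat \<Rightarrow> real" where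
  "vst r e = (if fst e = 0 then 1 else if snd e = 0 then r^3 else if fst e mod 3 = 2 then r^2 else r)"

lemma vst_vals:
  "vst r (0, j) = 1" "vst r (3*k+1, 3*k+2) = r" "vst r (3*k+2, 3*k+3) = r^2" "vst r (3*k+3, 0) = r^3"
  "vst r (3*k+3, 3*k+2) = r" "vst r (3*k+2, 3*k+1) = r^2" "vst r (3*k+1, 0) = r^3"
  by (simp_all add: vst_def)

lemmas vst_vals_s = vst_vals vst_vals[simplified]

lemma vst_eig:
  assumes m: "m \<ge> 1" and r4: "r^4 = 2 * real m - 1"
  shows "\<forall>e\<in>EE m. (\<Sum>f\<in>EE m. of_real (nb_matrix e f) * (of_real (vst r f) :: 'a::real_field)) = of_real r * of_real (vst r e)"
proof
  fix e assume e: "e \<in> EE m"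
  from EE_cases[OF e] obtain k where k: "k < m" and
    ek: "e \<in> {(0, 3*k+1), (3*k+1, 3*k+2), (3*k+2, 3*k+3), (3*k+3, 0), (0, 3*k+3), (3*k+3, 3*k+2), (3*k+2, 3*k+1), (3*k+1, 0)}"
    by blast
  define R where "R = (of_real r :: 'a)"
  define w where "w = (\<lambda>f. (of_real (vst r f) :: 'a))"
  have wv: "w (0, j) = 1" "w (3*k+1, 3*k+2) = R" "w (3*k+2, 3*k+3) = R^2" "w (3*k+3, 0) = R^3"
    "w (3*k+3, 3*k+2) = R" "w (3*k+2, 3*k+1) = R^2" "w (3*k+1, 0) = R^3" for j
    unfolding w_def R_def by (simp_all add: vst_vals_s)
  have hub: "(\<Sum>k'<m. w (0, 3*k'+1) + w (0, 3*k'+3)) = of_nat m * 2" by (simp add: wv)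
  have R4: "of_nat m * 2 - 1 = R^4"
  proof -
    have "R^4 = of_real (2 * real m - 1)" unfolding R_def using r4 by (metis of_real_power)
    thus ?thesis by (simp add: mult.commute)
  qed
  have RR: "R * 1 = R" "R * R = R^2" "R * R^2 = R^3" "R * R^3 = R^4" by (simp_all add: power_def)
  note E = edge_eqs[OF k, of w, unfolded hub wv]
  have goal: "(\<Sum>f\<in>EE m. of_real (nb_matrix e f) * w f) = R * w e"
    using ek E RR R4 wv by (elim insertE emptyE) simp_all
  then show "(\<Sum>f\<in>EE m. of_real (nb_matrix e f) * (of_real (vst r f) :: 'a)) = of_real r * of_real (vst r e)"
    unfolding w_def R_def .
qed


lemma nb_leading_rose:
  assumes m: "m \<ge> 1"
  shows "nb_leading (rose_nodes m) (rose_adj m) = rr m"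
  unfolding nb_leading_def
proof (rule Max_eqI)
  have sub: "cmod ` nb_eigenvalues (rose_nodes m) (rose_adj m) \<subseteq> {1, rr m}"
    using nb_eig_mod[OF m] by blast
  show "finite (cmod ` nb_eigenvalues (rose_nodes m) (rose_adj m))"
    using finite_subset[OF sub] by simp
  have r1: "1 \<le> rr m" unfolding rr_def sM_def using m by simp
  show "y \<le> rr m" if "y \<in> cmod ` nb_eigenvalues (rose_nodes m) (rose_adj m)" for y
    using that sub r1 by auto
  have ev: "complex_of_real (rr m) \<in> nb_eigenvalues (rose_nodes m) (rose_adj m)"
    unfolding nb_eigenvalues_def
  proof (intro CollectI exI[of _ "\<lambda>f. complex_of_real (vst (rr m) f)"] conjI)
    show "\<exists>e\<in>EE m. complex_of_real (vst (rr m) e) \<noteq> 0"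
      using EE_mem(1)[of 0 m] m by (intro bexI[of _ "(0, 1)"]) (auto simp: vst_def)
    show "\<forall>e\<in>EE m. (\<Sum>f\<in>EE m. complex_of_real (nb_matrix e f) * complex_of_real (vst (rr m) f)) =
        complex_of_real (rr m) * complex_of_real (vst (rr m) e)"
      by (rule vst_eig[OF m]) (use rr_facts[OF m] in simp)
  qed
  show "rr m \<in> cmod ` nb_eigenvalues (rose_nodes m) (rose_adj m)"
    using rr_facts(1)[OF m] by (intro image_eqI[OF _ ev]) simp
qed

lemma nb_vec_props:
  assumes m: "m \<ge> 1"
  defines "v \<equiv> nb_vec (rose_nodes m) (rose_adj m)"
  shows "(\<forall>e\<in>EE m. v e \<ge> 0) \<and> (\<exists>e\<in>EE m. v e \<noteq> 0) \<and>
    (\<forall>e\<in>EE m. (\<Sum>f\<in>EE m. of_real (nb_matrix e f) * v f) = rr m * v e)"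
proof -
  have ex: "(\<forall>e\<in>EE m. vst (rr m) e \<ge> 0) \<and> (\<exists>e\<in>EE m. vst (rr m) e \<noteq> 0) \<and>
      (\<forall>e\<in>EE m. (\<Sum>f\<in>EE m. nb_matrix e f * vst (rr m) f) = nb_leading (rose_nodes m) (rose_adj m) * vst (rr m) e)"
  proof (intro conjI)
    show "\<forall>e\<in>EE m. vst (rr m) e \<ge> 0" using rr_facts(1)[OF m] by (auto simp: vst_def)
    show "\<exists>e\<in>EE m. vst (rr m) e \<noteq> 0"
      using EE_mem(1)[of 0 m] m by (intro bexI[of _ "(0, 1)"]) (auto simp: vst_def)
    show "\<forall>e\<in>EE m. (\<Sum>f\<in>EE m. nb_matrix e f * vst (rr m) f) = nb_leading (rose_nodes m) (rose_adj m) * vst (rr m) e"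
      using vst_eig[OF m rr_facts(3)[OF m], where 'a=real] unfolding nb_leading_rose[OF m] by simp
  qed
  have "(\<forall>e\<in>EE m. v e \<ge> 0) \<and> (\<exists>e\<in>EE m. v e \<noteq> 0) \<and>
      (\<forall>e\<in>EE m. (\<Sum>f\<in>EE m. nb_matrix e f * v f) = nb_leading (rose_nodes m) (rose_adj m) * v e)"
    unfolding v_def nb_vec_def by (rule someI[of _ "vst (rr m)"]) (rule ex)
  thus ?thesis unfolding nb_leading_rose[OF m] by simp
qed

lemma nb_vec_vals:
  assumes m: "m \<ge> 2"
  defines "v \<equiv> nb_vec (rose_nodes m) (rose_adj m)"
  obtains \<alpha> where "\<alpha> \<noteq> 0" "\<And>k. k < m \<Longrightarrow> v (0, 3*k+1) = \<alpha> \<and> v (0, 3*k+3) = \<alpha> \<and>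
      v (3*k+1, 3*k+2) = rr m * \<alpha> \<and> v (3*k+2, 3*k+3) = (rr m)^2 * \<alpha> \<and> v (3*k+3, 0) = (rr m)^3 * \<alpha> \<and>
      v (3*k+3, 3*k+2) = rr m * \<alpha> \<and> v (3*k+2, 3*k+1) = (rr m)^2 * \<alpha> \<and> v (3*k+1, 0) = (rr m)^3 * \<alpha>"
proof -
  have m1: "m \<ge> 1" using m by simp
  note P = nb_vec_props[OF m1, folded v_def]
  have eq: "\<forall>e\<in>EE m. (\<Sum>f\<in>EE m. of_real (nb_matrix e f) * v f) = rr m * v e" using P by blast
  define H where "H = (\<Sum>k'<m. v (0, 3*k'+1) + v (0, 3*k'+3))"
  note c = chain[OF _ eq, folded H_def]
  note r = rr_facts[OF m1]
  have n1: "(rr m)^4 - 1 \<noteq> 0" "(rr m)^4 + 1 \<noteq> 0" using r(3) m by simp_all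
  have aa: "v (0, 3*k+1) = v (0, 3*k+3)" if k: "k < m" for k
  proof -
    have "((rr m)^4 - 1) * (v (0, 3*k+1) - v (0, 3*k+3)) = 0"
      using c(4)[OF k] c(8)[OF k] by (simp add: algebra_simps)
    thus ?thesis using n1 by simp
  qed
  define \<alpha> where "\<alpha> = H / ((rr m)^4 + 1)"
  have a: "v (0, 3*k+1) = \<alpha>" if k: "k < m" for k
  proof -
    have "((rr m)^4 + 1) * v (0, 3*k+1) = H" using c(4)[OF k] aa[OF k] by (simp add: algebra_simps)
    thus ?thesis unfolding \<alpha>_def using n1 by (simp add: field_simps)
  qed
  have vals: "v (0, 3*k+1) = \<alpha> \<and> v (0, 3*k+3) = \<alpha> \<and>
      v (3*k+1, 3*k+2) = rr m * \<alpha> \<and> v (3*k+2, 3*k+3) = (rr m)^2 * \<alpha> \<and> v (3*k+3, 0) = (rr m)^3 * \<alpha> \<and>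
      v (3*k+3, 3*k+2) = rr m * \<alpha> \<and> v (3*k+2, 3*k+1) = (rr m)^2 * \<alpha> \<and> v (3*k+1, 0) = (rr m)^3 * \<alpha>" if k: "k < m" for k
    using a[OF k] aa[OF k] c(1-3,5-7)[OF k] by simp
  have "\<alpha> \<noteq> 0"
  proof
    assume z: "\<alpha> = 0"
    have "v e = 0" if "e \<in> EE m" for e
      by (rule all_zero[OF eq _ that]) (use vals z in simp)
    thus False using P by blast
  qed
  thus ?thesis using that vals by blast
qed


lemma nbcrw_rose:
  assumes m: "m \<ge> 2"
  shows "nbcrw (rose_nodes m) (rose_adj m) = gw m (real m / (real m + sM m))"
proof -
  have m1: "m \<ge> 1" using m by simp
  define v where "v = nb_vec (rose_nodes m) (rose_adj m)"
  define x where "x = nb_centrality (rose_nodes m) (rose_adj m)"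
  define r where "r = rr m"
  note rf = rr_facts[OF m1, folded r_def]
  obtain \<alpha> where a0: "\<alpha> \<noteq> 0" and av: "\<And>k. k < m \<Longrightarrow> v (0, 3*k+1) = \<alpha> \<and> v (0, 3*k+3) = \<alpha> \<and>
      v (3*k+1, 3*k+2) = r * \<alpha> \<and> v (3*k+2, 3*k+3) = r^2 * \<alpha> \<and> v (3*k+3, 0) = r^3 * \<alpha> \<and>
      v (3*k+3, 3*k+2) = r * \<alpha> \<and> v (3*k+2, 3*k+1) = r^2 * \<alpha> \<and> v (3*k+1, 0) = r^3 * \<alpha>"
    using nb_vec_vals[OF m] unfolding v_def[symmetric] r_def[symmetric] by metis
  have xdef: "x i = (\<Sum>l\<in>NN m i. v (i, l))" for i unfolding x_def v_def nb_centrality_def ..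
  define c where "c = r^3 * \<alpha> + r * \<alpha>"
  have c0: "c \<noteq> 0"
  proof -
    have "c = \<alpha> * (r * (r^2 + 1))" unfolding c_def by (simp add: algebra_simps power_def)
    moreover have "r * (r^2 + 1) > 0" using rf(1) by (simp add: add_pos_nonneg)
    ultimately show ?thesis using a0 by (metis mult_eq_0_iff less_irrefl)
  qed
  have k0: "0 < m" using m by simp
  have x0: "x 0 = 2 * real m * \<alpha>"
  proof -
    have "x 0 = (\<Sum>k<m. v (0, 3*k+1) + v (0, 3*k+3))" unfolding xdef NN_vals(4)[OF k0] hub_sum ..
    also have "\<dots> = (\<Sum>k<m. 2 * \<alpha>)" by (intro sum.cong) (use av in auto)
    finally show ?thesis by simp
  qed
  have xk: "x (3*k+1) = c" "x (3*k+2) = 2 * r^2 * \<alpha>" "x (3*k+3) = c" if k: "k < m" for k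
  proof -
    have d: "(0::nat) \<noteq> 3*k+2" "3*k+1 \<noteq> 3*k+3" by simp_all
    show "x (3*k+1) = c" unfolding xdef NN_vals(1)[OF k] c_def using av[OF k] d by simp
    show "x (3*k+2) = 2 * r^2 * \<alpha>" unfolding xdef NN_vals(2)[OF k] using av[OF k] d by simp
    show "x (3*k+3) = c" unfolding xdef NN_vals(3)[OF k] c_def using av[OF k] d by (simp add: add.commute)
  qed
  have nb: "nbcrw (rose_nodes m) (rose_adj m) a b = rose_adj m a b * x b / (\<Sum>k\<in>rose_nodes m. rose_adj m a k * x k)" for a b
    unfolding nbcrw_def x_def ..
  have mp: "real m > 0" using m by simp
  have s: "r^2 = sM m" using rf(2) .
  have sp: "sM m > 0" using rf(4) .
  show ?thesis
  proof (rule gw_eqI)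
    show "nbcrw (rose_nodes m) (rose_adj m) a b = 0" if "rose_adj m a b = 0" for a b
      using that by (simp add: nbcrw_def)
    fix k assume k: "k < m"
    note av2 = adj_vals[OF k]
    have D0: "(\<Sum>j\<in>rose_nodes m. rose_adj m 0 j * x j) = real m * (2 * c)"
    proof -
      have "(\<Sum>k<m. x (3*k+1) + x (3*k+3)) = (\<Sum>k<m. 2 * c)"
      proof (intro sum.cong refl)
        fix k' assume "k' \<in> {..<m}"
        then show "x (3*k'+1) + x (3*k'+3) = 2 * c" using xk(1)[of k'] xk(3)[of k'] by simp
      qed
      then show ?thesis unfolding NS0 by simp
    qed
    have D1: "(\<Sum>j\<in>rose_nodes m. rose_adj m (3*k+1) j * x j) = 2 * real m * \<alpha> + 2 * r^2 * \<alpha>"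
      unfolding NS1[OF k] x0 xk(2)[OF k] ..
    have D2: "(\<Sum>j\<in>rose_nodes m. rose_adj m (3*k+2) j * x j) = c + c"
      unfolding NS2[OF k] xk(1)[OF k] xk(3)[OF k] ..
    have D3: "(\<Sum>j\<in>rose_nodes m. rose_adj m (3*k+3) j * x j) = 2 * real m * \<alpha> + 2 * r^2 * \<alpha>"
      unfolding NS3[OF k] x0 xk(2)[OF k] ..
    have den: "2 * real m * \<alpha> + 2 * r^2 * \<alpha> = 2 * \<alpha> * (real m + sM m)" unfolding s by (simp add: algebra_simps)
    have dz: "real m + sM m \<noteq> 0" using mp sp by simp
    show "nbcrw (rose_nodes m) (rose_adj m) 0 (3*k+1) = 1 / (2 * real m) \<and> nbcrw (rose_nodes m) (rose_adj m) 0 (3*k+3) = 1 / (2 * real m)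
       \<and> nbcrw (rose_nodes m) (rose_adj m) (3*k+1) 0 = real m / (real m + sM m) \<and> nbcrw (rose_nodes m) (rose_adj m) (3*k+1) (3*k+2) = 1 - real m / (real m + sM m)
       \<and> nbcrw (rose_nodes m) (rose_adj m) (3*k+2) (3*k+1) = 1/2 \<and> nbcrw (rose_nodes m) (rose_adj m) (3*k+2) (3*k+3) = 1/2
       \<and> nbcrw (rose_nodes m) (rose_adj m) (3*k+3) 0 = real m / (real m + sM m) \<and> nbcrw (rose_nodes m) (rose_adj m) (3*k+3) (3*k+2) = 1 - real m / (real m + sM m)"
    proof -
      have hp: "a / b = c' / d" if "b \<noteq> 0" "d \<noteq> 0" "a * d = c' * b" for a b c' d :: real
        using that by (simp add: frac_eq_eq)
      have A: "1 * c / (real m * (2 * c)) = 1 / (2 * real m)" by (rule hp) (use c0 mp in auto)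
      have B: "1 * (2 * real m * \<alpha>) / (2 * \<alpha> * (real m + sM m)) = real m / (real m + sM m)"
        by (rule hp) (use a0 dz in auto)
      have qq: "1 - real m / (real m + sM m) = sM m / (real m + sM m)" using dz by (simp add: field_simps)
      have C: "1 * (2 * r^2 * \<alpha>) / (2 * \<alpha> * (real m + sM m)) = 1 - real m / (real m + sM m)"
        unfolding qq s by (rule hp) (use a0 dz in auto)
      have D: "1 * c / (c + c) = 1 / 2" by (rule hp) (use c0 in auto)
      show ?thesis unfolding nb D0 D1 D2 D3 av2 xk[OF k] x0 den using A B C D by simp
    qed
  qed
qed


lemma B2_alg:
  fixes K M s :: real
  assumes "K \<noteq> 0" "s \<noteq> 0" "K = 3 * M + 1" "s^2 = 2 * M - 1"
  shows "(2*M^3 + 12*M^2 - 14*M + 4) / (K * s) + (36*M^2 - 8*M) / (3 * K) =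
     (2 * K^2 + 30 * K - 192) / (9 * (3 * s)) + (268 + 20 * (3 * s)) / (9 * K * (3 * s)) + (12 * K - 32) / 9"
  using assms(1,2) apply (simp add: field_simps)
  using assms(3,4) by algebra

theorem theorem7:
  fixes m :: nat
  assumes "m \<ge> 2"
  defines "V \<equiv> rose_nodes m" and "A \<equiv> rose_adj m" and "M \<equiv> real m" and "N \<equiv> real (3*m+1)"
  shows "mean_hitting_time (turw V A) V = 20 * M * (3*M - 1) / (3 * (3*M + 1))
       \<and> mean_hitting_time (turw V A) V = 20 * (N - 1) * (N - 2) / (9 * N)
       \<and> mean_hitting_time (nbcrw V A) V =
           (2*M^3 + 12*M^2 - 14*M + 4) / ((3*M + 1) * sqrt (2*M - 1)) + (36*M^2 - 8*M) / (3 * (3*M + 1))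
       \<and> mean_hitting_time (nbcrw V A) V =
           (2*N^2 + 30*N - 192) / (9 * sqrt (6*N - 15))
           + (268 + 20 * sqrt (6*N - 15)) / (9 * N * sqrt (6*N - 15)) + (12*N - 32) / 9
       \<and> mean_hitting_time (merw V A) V = (6*M^3 + 36*M^2 + 10*M - 12) / (9*M + 3)
       \<and> mean_hitting_time (merw V A) V = (2*N^3 + 30*N^2 - 36*N - 104) / (27 * N)"
proof -
  have m1: "m \<ge> 1" using assms(1) by simp
  have M2: "M \<ge> 2" unfolding M_def using assms(1) by simp
  have NM: "N = 3 * M + 1" unfolding N_def M_def by simp
  define s where "s = sM m"
  have s: "s > 0" "s^2 = 2 * M - 1" using rr_facts[OF m1] unfolding s_def M_def by auto
  have s_def': "sqrt (2 * M - 1) = s" unfolding s_def sM_def M_def ..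
  have p1: "0 < (1/2::real)" "(1/2::real) < 1" by simp_all
  have p2: "0 < M / (M + 1)" "M / (M + 1) < 1" using M2 by simp_all
  have p3: "0 < M / (M + s)" "M / (M + s) < 1" using M2 s by simp_all
  have T: "mean_hitting_time (turw V A) V = 20 * M * (3*M - 1) / (3 * (3*M + 1))"
  proof -
    have "mean_hitting_time (turw V A) V = mean_hitting_time (gw m (1/2)) (rose_nodes m)"
      unfolding V_def A_def turw_rose[OF m1] ..
    also have "\<dots> = Tot m (1/2) / ((3 * M + 1) * (3 * M))" using mean_gw[OF m1 p1] unfolding M_def .
    also have "\<dots> = 20 * M * (3*M - 1) / (3 * (3*M + 1))" by (rule fin_T[OF M2]) (simp add: M_def)
    finally show ?thesis .
  qed
  have Mw: "mean_hitting_time (merw V A) V = (6*M^3 + 36*M^2 + 10*M - 12) / (9*M + 3)"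
  proof -
    have "mean_hitting_time (merw V A) V = mean_hitting_time (gw m (M / (M + 1))) (rose_nodes m)"
      unfolding V_def A_def merw_rose[OF m1] M_def ..
    also have "\<dots> = Tot m (M / (M + 1)) / ((3 * M + 1) * (3 * M))" using mean_gw[OF m1 p2] unfolding M_def .
    also have "\<dots> = (6*M^3 + 36*M^2 + 10*M - 12) / (9*M + 3)" by (rule fin_M[OF M2]) (simp add: M_def)
    finally show ?thesis .
  qed
  have B: "mean_hitting_time (nbcrw V A) V =
      (2*M^3 + 12*M^2 - 14*M + 4) / ((3*M + 1) * sqrt (2*M - 1)) + (36*M^2 - 8*M) / (3 * (3*M + 1))"
  proof -
    have "mean_hitting_time (nbcrw V A) V = mean_hitting_time (gw m (M / (M + s))) (rose_nodes m)"
      unfolding V_def A_def nbcrw_rose[OF assms(1)] M_def s_def ..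
    also have "\<dots> = Tot m (M / (M + s)) / ((3 * M + 1) * (3 * M))" using mean_gw[OF m1 p3] unfolding M_def .
    also have "\<dots> = (2*M^3 + 12*M^2 - 14*M + 4) / ((3*M + 1) * s) + (36*M^2 - 8*M) / (3 * (3*M + 1))"
      by (rule fin_B[OF M2 _ s]) (simp add: M_def)
    finally show ?thesis unfolding s_def' .
  qed
  have sq6: "sqrt (6 * N - 15) = 3 * s"
  proof -
    have "6 * N - 15 = 9 * (2 * M - 1)" unfolding NM by simp
    hence "sqrt (6 * N - 15) = sqrt 9 * sqrt (2 * M - 1)" by (simp only: real_sqrt_mult)
    also have "sqrt 9 = (3::real)" by (simp add: real_sqrt_unique)
    finally show ?thesis using s_def' by simp
  qed
  have T2: "20 * M * (3*M - 1) / (3 * (3*M + 1)) = 20 * (N - 1) * (N - 2) / (9 * N)"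
    unfolding NM using M2 by (simp add: field_simps)
  have M3: "(6*M^3 + 36*M^2 + 10*M - 12) / (9*M + 3) = (2*N^3 + 30*N^2 - 36*N - 104) / (27 * N)"
    unfolding NM using M2 by (simp add: field_simps) algebra
  have B2: "(2*M^3 + 12*M^2 - 14*M + 4) / ((3*M + 1) * sqrt (2*M - 1)) + (36*M^2 - 8*M) / (3 * (3*M + 1)) =
      (2*N^2 + 30*N - 192) / (9 * sqrt (6*N - 15))
           + (268 + 20 * sqrt (6*N - 15)) / (9 * N * sqrt (6*N - 15)) + (12*N - 32) / 9"
    unfolding sq6 s_def' unfolding NM using M2 s by (intro B2_alg) auto
  show ?thesis using T T2 B B2 Mw M3 by simp
qed


end
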